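(* Let $M=(E,\mathcal{I})$ be a matroid, $m,\Delta$ positive integers and $W:E\to\{-\Delta,\dots,\Delta\}^m$ weight vectors. Let $A,B\in\mathcal{I}$ be disjoint with $|A|=|B|=k$, and let $\mu=\|W(A)-W(B)\|_1$. Then there are unicolor sets $A_0,A_1,\dots,A_\ell\subseteq A$ and $B_0,B_1,\dots,B_\ell\subseteq B$ such that (i) $(A\setminus A_i)\cup B_i\in\mathcal{I}$ for all $i$, (ii) $|A_i|=|B_i|\ge k/(2m\Delta)^{10m}-\mu$ for all $i$, (iii) $-\delta_0\in\mathrm{cone}(\{\delta_1,\dots,\delta_\ell\})$, where $\delta_i\in\mathbb{Z}^m$ satisfies $\delta_i=W(a)-W(b)$ for all $a\in A_i$, $b\in B_i$.
   Context: $W(S)=\sum_{e\in S}W(e)$. A set $S\subseteq E$ is unicolor if $W(a)=W(b)$ for all $a,b\in S$. $\mathrm{cone}(Y)=\{\sum_{y\in Y}\lambda_y y:\lambda_y\ge 0\}$. *)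

theory Defs
  imports Complex_Main
begin

definition matroid :: "'a set \<Rightarrow> ('a set \<Rightarrow> bool) \<Rightarrow> bool" where
  "matroid E indep \<longleftrightarrow>
     finite E \<and>
     (\<forall>X. indep X \<longrightarrow> X \<subseteq> E) \<and>
     indep {} \<and>
     (\<forall>X Y. indep X \<and> Y \<subseteq> X \<longrightarrow> indep Y) \<and>
     (\<forall>X Y. indep X \<and> indep Y \<and> card X < card Y \<longrightarrow>
         (\<exists>y \<in> Y - X. indep (insert y X)))"

text \<open>Vectors in Z^m are represented as functions nat => int, only coordinates j < m matter.\<close>
definition wsum :: "('a \<Rightarrow> nat \<Rightarrow> int) \<Rightarrow> 'a set \<Rightarrow> nat \<Rightarrow> int" where
  "wsum W S = (\<lambda>j. \<Sum>e\<in>S. W e j)"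

definition l1norm :: "nat \<Rightarrow> (nat \<Rightarrow> int) \<Rightarrow> int" where
  "l1norm m v = (\<Sum>j<m. \<bar>v j\<bar>)"

definition unicolor :: "nat \<Rightarrow> ('a \<Rightarrow> nat \<Rightarrow> int) \<Rightarrow> 'a set \<Rightarrow> bool" where
  "unicolor m W S \<longleftrightarrow> (\<forall>a\<in>S. \<forall>b\<in>S. \<forall>j<m. W a j = W b j)"

definition in_cone :: "nat \<Rightarrow> (nat \<Rightarrow> int) \<Rightarrow> nat set \<Rightarrow> (nat \<Rightarrow> nat \<Rightarrow> int) \<Rightarrow> bool" where
  "in_cone m v I y \<longleftrightarrow>
     (\<exists>c::nat \<Rightarrow> real. (\<forall>i\<in>I. c i \<ge> 0) \<and>
        (\<forall>j<m. real_of_int (v j) = (\<Sum>i\<in>I. c i * real_of_int (y i j))))"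

end

theory Submission
  imports Defs "Jordan_Normal_Form.Determinant"
begin

definition dotr :: "nat \<Rightarrow> (nat \<Rightarrow> real) \<Rightarrow> (nat \<Rightarrow> real) \<Rightarrow> real" where
  "dotr m y g = (\<Sum>j<m. y j * g j)"

definition fmcomb :: "nat \<Rightarrow> (nat \<Rightarrow> real) \<Rightarrow> (nat \<Rightarrow> real) \<Rightarrow> (nat \<Rightarrow> real)" where
  "fmcomb m g h = (\<lambda>j. (- h m) * g j + g m * h j)"

lemma dotr_Suc: "dotr (Suc m) y g = dotr m y g + y m * g m"
  by (simp add: dotr_def)

lemma dotr_upd: "dotr m (y(m := c)) g = dotr m y g"
  by (simp add: dotr_def)

lemma dotr_fmcomb: "dotr m y (fmcomb m' g h) = (- h m') * dotr m y g + g m' * dotr m y h"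
proof -
  have "dotr m y (fmcomb m' g h) = (\<Sum>j<m. (- h m') * (y j * g j) + g m' * (y j * h j))"
    unfolding dotr_def fmcomb_def by (rule sum.cong) (auto simp: algebra_simps)
  then show ?thesis by (simp only: sum.distrib sum_distrib_left[symmetric] dotr_def)
qed

lemma fm_gordan:
  fixes G :: "(nat \<Rightarrow> real) set"
  assumes "finite G"
  shows "(\<exists>y. \<forall>g\<in>G. dotr m y g > 0) \<or>
         (\<exists>lam. (\<forall>g\<in>G. lam g \<ge> 0) \<and> (\<exists>g\<in>G. lam g > 0) \<and> (\<forall>j<m. (\<Sum>g\<in>G. lam g * g j) = 0))"
  using assms
proof (induction m arbitrary: G)
  case 0
  show ?case
  proof (cases "G = {}")
    case True then show ?thesis by auto
  next
    case False
    then obtain g where "g \<in> G" by auto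
    then have "\<exists>lam. (\<forall>g\<in>G. lam g \<ge> 0) \<and> (\<exists>g\<in>G. lam g > 0) \<and> (\<forall>j<(0::nat). (\<Sum>g\<in>G. lam g * g j) = 0)"
      by (intro exI[of _ "\<lambda>_. 1"]) auto
    then show ?thesis by blast
  qed
next
  case (Suc m)
  define Gp where "Gp = {g\<in>G. g m > 0}"
  define Gn where "Gn = {g\<in>G. g m < 0}"
  define G0 where "G0 = {g\<in>G. g m = 0}"
  define G' where "G' = G0 \<union> (\<lambda>(g,h). fmcomb m g h) ` (Gp \<times> Gn)"
  have fGp: "finite Gp" and fGn: "finite Gn" using Suc.prems by (auto simp: Gp_def Gn_def)
  have fG': "finite G'" unfolding G'_def G0_def using Suc.prems fGp fGn by auto
  have G'm: "g' m = 0" if "g' \<in> G'" for g'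
    using that by (auto simp: G'_def G0_def fmcomb_def)
  from Suc.IH[OF fG'] show ?case
  proof
    assume "\<exists>y. \<forall>g\<in>G'. 0 < dotr m y g"
    then obtain y where y: "\<And>g. g \<in> G' \<Longrightarrow> 0 < dotr m y g" by auto
    define lo where "lo = Max ((\<lambda>g. - dotr m y g / g m) ` Gp)"
    define hi where "hi = Min ((\<lambda>h. dotr m y h / (- h m)) ` Gn)"
    define c where "c = (if Gp = {} \<and> Gn = {} then 0 else if Gn = {} then lo + 1
       else if Gp = {} then hi - 1 else (lo + hi) / 2)"
    have lohi: "lo < hi" if "Gp \<noteq> {}" "Gn \<noteq> {}"
    proof -
      have "lo \<in> (\<lambda>g. - dotr m y g / g m) ` Gp"
        unfolding lo_def using fGp that by (intro Max_in) auto
      then obtain g1 where g1: "g1 \<in> Gp" "lo = - dotr m y g1 / g1 m" by auto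
      have "hi \<in> (\<lambda>h. dotr m y h / (- h m)) ` Gn"
        unfolding hi_def using fGn that by (intro Min_in) auto
      then obtain h1 where h1: "h1 \<in> Gn" "hi = dotr m y h1 / (- h1 m)" by auto
      have "fmcomb m g1 h1 \<in> G'" using g1 h1 unfolding G'_def by auto
      then have "0 < (- h1 m) * dotr m y g1 + g1 m * dotr m y h1"
        using y dotr_fmcomb by metis
      moreover have g1p: "g1 m > 0" and h1n: "h1 m < 0" using g1 h1 by (auto simp: Gp_def Gn_def)
      moreover have "lo * g1 m = - dotr m y g1" using g1 \<open>g1 m > 0\<close> by simp
      moreover have "hi * (- h1 m) = dotr m y h1" using h1 \<open>h1 m < 0\<close> by simp
      ultimately have "lo * (g1 m * (- h1 m)) < hi * (g1 m * (- h1 m))"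
      proof -
        assume a1: "0 < - h1 m * dotr m y g1 + g1 m * dotr m y h1"
          and a2: "lo * g1 m = - dotr m y g1" and a3: "hi * (- h1 m) = dotr m y h1"
        have "lo * (g1 m * (- h1 m)) = (lo * g1 m) * (- h1 m)" by (simp only: mult.assoc)
        also have "\<dots> = - h1 m * (- dotr m y g1)" using a2 by simp
        finally have e1: "lo * (g1 m * (- h1 m)) = - h1 m * (- dotr m y g1)" .
        have "hi * (g1 m * (- h1 m)) = g1 m * (hi * (- h1 m))" by (simp only: mult.assoc mult.left_commute)
        also have "\<dots> = g1 m * dotr m y h1" using a3 by simp
        finally have e2: "hi * (g1 m * (- h1 m)) = g1 m * dotr m y h1" .
        show ?thesis unfolding e1 e2 using a1 by simp
      qed
      moreover have "g1 m * (- h1 m) > 0" using \<open>g1 m > 0\<close> \<open>h1 m < 0\<close> by (simp add: mult_pos_neg)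
      ultimately show ?thesis by (simp add: mult_less_cancel_right)
    qed
    have lo_le: "- dotr m y g / g m \<le> lo" if "g \<in> Gp" for g
      unfolding lo_def using fGp that by (intro Max_ge) auto
    have hi_ge: "hi \<le> dotr m y h / (- h m)" if "h \<in> Gn" for h
      unfolding hi_def using fGn that by (intro Min_le) auto
    have clo: "lo < c" if "Gp \<noteq> {}" using lohi that by (auto simp: c_def)
    have chi: "c < hi" if "Gn \<noteq> {}" using lohi that by (auto simp: c_def)
    have "\<forall>g\<in>G. 0 < dotr (Suc m) (y(m := c)) g"
    proof
      fix g assume g: "g \<in> G"
      have eq: "dotr (Suc m) (y(m := c)) g = dotr m y g + c * g m"
        by (simp add: dotr_Suc dotr_upd)
      consider "g m = 0" | "g m > 0" | "g m < 0" by linarith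
      then show "0 < dotr (Suc m) (y(m := c)) g"
      proof cases
        case 1
        then have "g \<in> G'" using g by (auto simp: G'_def G0_def)
        then show ?thesis using y 1 eq by auto
      next
        case 2
        then have gp: "g \<in> Gp" using g by (auto simp: Gp_def)
        then have "- dotr m y g / g m < c" using lo_le clo by fastforce
        then show ?thesis using 2 eq by (simp add: field_simps)
      next
        case 3
        then have gp: "g \<in> Gn" using g by (auto simp: Gn_def)
        then have "c < dotr m y g / (- g m)" using hi_ge chi by fastforce
        then show ?thesis using 3 eq by (simp add: field_simps)
      qed
    qed
    then show ?case by blast
  next
    assume "\<exists>lam. (\<forall>g\<in>G'. lam g \<ge> 0) \<and> (\<exists>g\<in>G'. lam g > 0) \<and> (\<forall>j<m. (\<Sum>g\<in>G'. lam g * g j) = 0)"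
    then obtain lam where lam0: "\<And>g. g\<in>G' \<Longrightarrow> lam g \<ge> 0" and lampos: "\<exists>g\<in>G'. lam g > 0"
      and lamsum: "\<And>j. j<m \<Longrightarrow> (\<Sum>g\<in>G'. lam g * g j) = 0" by auto
    define pq where "pq = (\<lambda>g'. SOME pq. pq \<in> Gp \<times> Gn \<and> g' = fmcomb m (fst pq) (snd pq))"
    define kap where "kap = (\<lambda>g' g. if g' \<in> G0 then (if g = g' then 1 else 0) else
       (if g = fst (pq g') then - snd (pq g') m else 0) + (if g = snd (pq g') then fst (pq g') m else 0))"
    have kap: "(\<forall>g. kap g' g \<ge> 0) \<and> (\<forall>j. (\<Sum>g\<in>G. kap g' g * g j) = g' j) \<and> (\<exists>g\<in>G. kap g' g > 0)"
      if "g' \<in> G'" for g'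
    proof (cases "g' \<in> G0")
      case True
      then have "g' \<in> G" by (auto simp: G0_def)
      have k: "kap g' g = (if g = g' then 1 else 0)" for g using True by (simp add: kap_def)
      have "(\<Sum>g\<in>G. kap g' g * g j) = g' j" for j
      proof -
        have "(\<Sum>g\<in>G. kap g' g * g j) = (\<Sum>g\<in>G. if g = g' then g' j else 0)"
          by (rule sum.cong) (auto simp: k)
        then show ?thesis using \<open>g' \<in> G\<close> Suc.prems by simp
      qed
      then show ?thesis using \<open>g' \<in> G\<close> by (auto simp: k)
    next
      case False
      then have "\<exists>pq. pq \<in> Gp \<times> Gn \<and> g' = fmcomb m (fst pq) (snd pq)" using that by (auto simp: G'_def)
      then have P: "pq g' \<in> Gp \<times> Gn \<and> g' = fmcomb m (fst (pq g')) (snd (pq g'))"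
        unfolding pq_def by (rule someI_ex)
      obtain p q where pqe: "pq g' = (p, q)" by fastforce
      have p: "p \<in> G" "p m > 0" and q: "q \<in> G" "q m < 0" using P pqe by (auto simp: Gp_def Gn_def)
      have pnq: "p \<noteq> q" using p q by auto
      have k: "kap g' g = (if g = p then - q m else 0) + (if g = q then p m else 0)" for g
        using False pqe by (simp add: kap_def)
      have "(\<Sum>g\<in>G. kap g' g * g j) = g' j" for j
      proof -
        have "(\<Sum>g\<in>G. kap g' g * g j) = (\<Sum>g\<in>G. (if g = p then - q m * p j else 0) + (if g = q then p m * q j else 0))"
          by (rule sum.cong) (auto simp: k)
        also have "\<dots> = - q m * p j + p m * q j"
          using p q Suc.prems by (simp add: sum.distrib sum.delta)
        also have "\<dots> = g' j" using P pqe by (simp add: fmcomb_def)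
        finally show ?thesis .
      qed
      moreover have "\<forall>g. kap g' g \<ge> 0" using p q by (auto simp: k)
      moreover have "kap g' p > 0" using p q pnq by (simp add: k)
      ultimately show ?thesis using p by blast
    qed
    define lamG where "lamG = (\<lambda>g. \<Sum>g'\<in>G'. lam g' * kap g' g)"
    have "\<forall>g\<in>G. lamG g \<ge> 0" unfolding lamG_def using lam0 kap by (auto intro!: sum_nonneg)
    moreover have "\<exists>g\<in>G. lamG g > 0"
    proof -
      obtain g' where g': "g' \<in> G'" "lam g' > 0" using lampos by auto
      obtain g where g: "g \<in> G" "kap g' g > 0" using kap[OF g'(1)] by auto
      have "0 < lam g' * kap g' g" using g g' by simp
      also have "\<dots> \<le> lamG g" unfolding lamG_def
        by (rule member_le_sum[OF g'(1)]) (use lam0 kap fG' in \<open>auto\<close>)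
      finally show ?thesis using g by auto
    qed
    moreover have "\<forall>j<Suc m. (\<Sum>g\<in>G. lamG g * g j) = 0"
    proof (intro allI impI)
      fix j assume j: "j < Suc m"
      have "(\<Sum>g\<in>G. lamG g * g j) = (\<Sum>g'\<in>G'. lam g' * (\<Sum>g\<in>G. kap g' g * g j))"
        unfolding lamG_def by (simp add: sum_distrib_right sum_distrib_left mult.assoc sum.swap[of _ G])
      also have "\<dots> = (\<Sum>g'\<in>G'. lam g' * g' j)" using kap by (intro sum.cong) auto
      also have "\<dots> = 0"
      proof (cases "j < m")
        case True then show ?thesis using lamsum by auto
      next
        case False then have "j = m" using j by auto
        then show ?thesis using G'm by (simp add: sum.neutral)
      qed
      finally show "(\<Sum>g\<in>G. lamG g * g j) = 0" .
    qed
    ultimately show ?case by blast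
  qed
qed

definition rv :: "(nat \<Rightarrow> int) \<Rightarrow> nat \<Rightarrow> real" where
  "rv g = (\<lambda>j. real_of_int (g j))"

definition gram :: "nat \<Rightarrow> (nat \<Rightarrow> int) list \<Rightarrow> int mat" where
  "gram m ts = mat (length ts) (length ts) (\<lambda>(i,k). \<Sum>j<m. (ts!i) j * (ts!k) j)"

definition indepv :: "nat \<Rightarrow> (nat \<Rightarrow> int) list \<Rightarrow> bool" where
  "indepv m ts \<longleftrightarrow> (\<forall>\<alpha>::nat\<Rightarrow>real. (\<forall>j<m. (\<Sum>i<length ts. \<alpha> i * real_of_int ((ts!i) j)) = 0)
      \<longrightarrow> (\<forall>i<length ts. \<alpha> i = 0))"

definition inspan :: "nat \<Rightarrow> (nat \<Rightarrow> int) list \<Rightarrow> (nat \<Rightarrow> int) \<Rightarrow> bool" where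
  "inspan m ts g \<longleftrightarrow> (\<exists>\<alpha>::nat\<Rightarrow>real. \<forall>j<m. real_of_int (g j) = (\<Sum>i<length ts. \<alpha> i * real_of_int ((ts!i) j)))"

lemma gram_carrier: "gram m ts \<in> carrier_mat (length ts) (length ts)"
  by (simp add: gram_def)

lemma gram_index: "i < length ts \<Longrightarrow> k < length ts \<Longrightarrow> gram m ts $$ (i,k) = (\<Sum>j<m. (ts!i) j * (ts!k) j)"
  by (simp add: gram_def)

lemma adj_entry1:
  assumes A: "(A :: 'a :: comm_ring_1 mat) \<in> carrier_mat n n" and i: "i < n" and k: "k < n"
  shows "(\<Sum>l<n. A $$ (i,l) * adj_mat A $$ (l,k)) = (if i = k then det A else 0)"
proof -
  have "(A * adj_mat A) $$ (i,k) = (if i = k then det A else 0)"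
    using adj_mat(2)[OF A] i k by simp
  moreover have "(A * adj_mat A) $$ (i,k) = (\<Sum>l<n. A $$ (i,l) * adj_mat A $$ (l,k))"
    using A adj_mat(1)[OF A] i k by (simp add: scalar_prod_def atLeast0LessThan)
  ultimately show ?thesis by simp
qed

lemma adj_entry2:
  assumes A: "(A :: 'a :: comm_ring_1 mat) \<in> carrier_mat n n" and i: "i < n" and k: "k < n"
  shows "(\<Sum>l<n. adj_mat A $$ (i,l) * A $$ (l,k)) = (if i = k then det A else 0)"
proof -
  have "(adj_mat A * A) $$ (i,k) = (if i = k then det A else 0)"
    using adj_mat(3)[OF A] i k by simp
  moreover have "(adj_mat A * A) $$ (i,k) = (\<Sum>l<n. adj_mat A $$ (i,l) * A $$ (l,k))"
    using A adj_mat(1)[OF A] i k by (simp add: scalar_prod_def atLeast0LessThan)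
  ultimately show ?thesis by simp
qed

lemma det_ne0_indepv:
  assumes d: "det (gram m ts) \<noteq> 0"
  shows "indepv m ts"
  unfolding indepv_def
proof (intro allI impI)
  fix \<alpha> :: "nat \<Rightarrow> real" and l
  assume h: "\<forall>j<m. (\<Sum>i<length ts. \<alpha> i * real_of_int ((ts!i) j)) = 0" and l: "l < length ts"
  let ?r = "length ts"
  let ?G = "gram m ts"
  let ?a = "\<lambda>i k. real_of_int (adj_mat ?G $$ (i,k))"
  let ?g = "\<lambda>i k. real_of_int (?G $$ (i,k))"
  have Gk: "(\<Sum>i<?r. ?g k i * \<alpha> i) = 0" if k: "k < ?r" for k
  proof -
    have "(\<Sum>i<?r. ?g k i * \<alpha> i) = (\<Sum>i<?r. \<Sum>j<m. real_of_int ((ts!k) j) * (\<alpha> i * real_of_int ((ts!i) j)))"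
      using k by (intro sum.cong) (auto simp: gram_index sum_distrib_left sum_distrib_right algebra_simps)
    also have "\<dots> = (\<Sum>j<m. real_of_int ((ts!k) j) * (\<Sum>i<?r. \<alpha> i * real_of_int ((ts!i) j)))"
      unfolding sum_distrib_left by (subst sum.swap) (simp add: mult.assoc)
    also have "\<dots> = 0" using h by simp
    finally show ?thesis .
  qed
  have z: "(\<Sum>k<?r. ?a l k * (\<Sum>i<?r. ?g k i * \<alpha> i)) = 0" using Gk by simp
  have sw: "(\<Sum>k<?r. ?a l k * (\<Sum>i<?r. ?g k i * \<alpha> i)) = (\<Sum>i<?r. (\<Sum>k<?r. ?a l k * ?g k i) * \<alpha> i)"
    unfolding sum_distrib_left sum_distrib_right by (subst sum.swap) (simp add: mult.assoc)
  have ad: "(\<Sum>k<?r. ?a l k * ?g k i) = (if l = i then real_of_int (det ?G) else 0)" if "i < ?r" for i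
  proof -
    have "(\<Sum>k<?r. ?a l k * ?g k i) = real_of_int (\<Sum>k<?r. adj_mat ?G $$ (l,k) * ?G $$ (k,i))" by simp
    also have "\<dots> = (if l = i then real_of_int (det ?G) else 0)"
      using adj_entry2[OF gram_carrier l that] by simp
    finally show ?thesis .
  qed
  have "(\<Sum>i<?r. (\<Sum>k<?r. ?a l k * ?g k i) * \<alpha> i) = (\<Sum>i<?r. if i = l then real_of_int (det ?G) * \<alpha> l else 0)"
    by (rule sum.cong) (simp_all add: ad)
  also have "\<dots> = real_of_int (det ?G) * \<alpha> l" using l by simp
  finally have "real_of_int (det ?G) * \<alpha> l = 0" using z sw by simp
  then show "\<alpha> l = 0" using d by simp
qed

lemma indepv_det_ne0:
  assumes ind: "indepv m ts"
  shows "det (gram m ts) \<noteq> 0"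
proof
  assume "det (gram m ts) = 0"
  then obtain v where v: "v \<in> carrier_vec (length ts)" "v \<noteq> 0\<^sub>v (length ts)"
    and Gv: "gram m ts *\<^sub>v v = 0\<^sub>v (length ts)"
    using det_0_iff_vec_prod_zero[OF gram_carrier] by blast
  let ?r = "length ts"
  let ?t = "\<lambda>i j. (ts!i) j"
  have row0: "(\<Sum>k<?r. gram m ts $$ (i,k) * v $ k) = 0" if i: "i < ?r" for i
  proof -
    have "(gram m ts *\<^sub>v v) $ i = 0" using Gv i by simp
    moreover have "(gram m ts *\<^sub>v v) $ i = (\<Sum>k<?r. gram m ts $$ (i,k) * v $ k)"
      using i v gram_carrier[of m ts] by (simp add: scalar_prod_def atLeast0LessThan)
    ultimately show ?thesis by simp
  qed
  have pw: "v $ i * ?t i j * (v $ k * ?t k j) = v $ i * (?t i j * ?t k j) * v $ k" for i j k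
    by (simp add: algebra_simps)
  have "(\<Sum>j<m. (\<Sum>i<?r. v $ i * ?t i j)\<^sup>2) = (\<Sum>j<m. \<Sum>i<?r. \<Sum>k<?r. v $ i * (?t i j * ?t k j) * v $ k)"
    by (simp only: power2_eq_square sum_product pw)
  also have "\<dots> = (\<Sum>i<?r. \<Sum>j<m. \<Sum>k<?r. v $ i * (?t i j * ?t k j) * v $ k)"
    by (rule sum.swap)
  also have "\<dots> = (\<Sum>i<?r. \<Sum>k<?r. \<Sum>j<m. v $ i * (?t i j * ?t k j) * v $ k)"
    by (rule sum.cong[OF refl], rule sum.swap)
  also have "\<dots> = (\<Sum>i<?r. v $ i * (\<Sum>k<?r. gram m ts $$ (i,k) * v $ k))"
    by (simp add: gram_index sum_distrib_left sum_distrib_right mult.assoc)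
  also have "\<dots> = 0" using row0 by simp
  finally have sq: "(\<Sum>j<m. (\<Sum>i<?r. v $ i * ?t i j)\<^sup>2) = 0" .
  have each: "(\<Sum>i<?r. v $ i * ?t i j) = 0" if j: "j < m" for j
  proof -
    have "(\<Sum>i<?r. v $ i * ?t i j)\<^sup>2 = 0"
      using sq j by (subst (asm) sum_nonneg_eq_0_iff) auto
    then show ?thesis by simp
  qed
  have "\<forall>j<m. (\<Sum>i<?r. real_of_int (v $ i) * real_of_int (?t i j)) = 0"
  proof (intro allI impI)
    fix j assume "j < m"
    have "(\<Sum>i<?r. real_of_int (v $ i) * real_of_int (?t i j)) = real_of_int (\<Sum>i<?r. v $ i * ?t i j)" by simp
    then show "(\<Sum>i<?r. real_of_int (v $ i) * real_of_int (?t i j)) = 0" using each[OF \<open>j < m\<close>] by simp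
  qed
  moreover have "(\<forall>j<m. (\<Sum>i<?r. real_of_int (v $ i) * real_of_int (?t i j)) = 0) \<longrightarrow> (\<forall>i<?r. real_of_int (v $ i) = 0)"
    using ind unfolding indepv_def by (rule spec[where x="\<lambda>i. real_of_int (v $ i)"])
  ultimately have "\<forall>i<?r. real_of_int (v $ i) = 0" by blast
  then have "v = 0\<^sub>v ?r" using v(1) by (intro eq_vecI) auto
  then show False using v(2) by simp
qed

lemma det_ne0_len:
  assumes d: "det (gram m ts) \<noteq> 0"
  shows "length ts \<le> m"
proof (rule ccontr)
  assume "\<not> length ts \<le> m"
  then have rm: "m < length ts" by simp
  let ?r = "length ts"
  define P :: "int mat" where "P = mat ?r ?r (\<lambda>(i,j). if j < m then (ts!i) j else 0)"
  have Pc: "P \<in> carrier_mat ?r ?r" by (simp add: P_def)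
  define e :: "int vec" where "e = vec ?r (\<lambda>j. if j = ?r - 1 then 1 else 0)"
  have ec: "e \<in> carrier_vec ?r" by (simp add: e_def)
  have "e $ (?r - 1) = 1" using rm by (simp add: e_def)
  then have en: "e \<noteq> 0\<^sub>v ?r" using rm by auto
  have "P *\<^sub>v e = 0\<^sub>v ?r"
  proof (rule eq_vecI)
    fix i assume i: "i < dim_vec (0\<^sub>v ?r :: int vec)"
    then have i': "i < ?r" by simp
    have "(P *\<^sub>v e) $ i = (\<Sum>j<?r. P $$ (i,j) * e $ j)"
      using i' Pc ec by (simp add: scalar_prod_def atLeast0LessThan)
    also have "\<dots> = (\<Sum>j<?r. 0)"
      using i' rm by (intro sum.cong refl) (auto simp: P_def e_def)
    finally show "(P *\<^sub>v e) $ i = 0\<^sub>v ?r $ i" using i' by simp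
  qed (simp add: P_def)
  then have "det P = 0" using det_0_iff_vec_prod_zero[OF Pc] ec en by blast
  then have "det (transpose_mat P) = 0" using det_transpose[OF Pc] by simp
  then obtain v where v: "v \<in> carrier_vec ?r" "v \<noteq> 0\<^sub>v ?r" and Pv: "transpose_mat P *\<^sub>v v = 0\<^sub>v ?r"
    using det_0_iff_vec_prod_zero[of "transpose_mat P" ?r] Pc by auto
  have col0: "(\<Sum>i<?r. real_of_int (v $ i) * real_of_int ((ts!i) j)) = 0" if j: "j < m" for j
  proof -
    have jr: "j < ?r" using j rm by simp
    have "(transpose_mat P *\<^sub>v v) $ j = (\<Sum>i<?r. P $$ (i,j) * v $ i)"
      using jr Pc v by (simp add: scalar_prod_def atLeast0LessThan)
    also have "\<dots> = (\<Sum>i<?r. v $ i * (ts!i) j)"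
      using jr j by (intro sum.cong refl) (auto simp: P_def)
    finally have "(\<Sum>i<?r. v $ i * (ts!i) j) = 0" using Pv jr by simp
    then have "real_of_int (\<Sum>i<?r. v $ i * (ts!i) j) = 0" by simp
    then show ?thesis by simp
  qed
  have "(\<forall>j<m. (\<Sum>i<?r. real_of_int (v $ i) * real_of_int ((ts!i) j)) = 0) \<longrightarrow> (\<forall>i<?r. real_of_int (v $ i) = 0)"
    using det_ne0_indepv[OF d] unfolding indepv_def by (rule spec[where x="\<lambda>i. real_of_int (v $ i)"])
  then have "\<forall>i<?r. real_of_int (v $ i) = 0" using col0 by blast
  then have "v = 0\<^sub>v ?r" using v(1) by (intro eq_vecI) auto
  then show False using v(2) by simp
qed

lemma proj_exists:
  assumes d: "det (gram m ts) \<noteq> 0" and ns: "\<not> inspan m ts g"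
  shows "\<exists>z. (\<forall>i<length ts. dotr m z (rv (ts!i)) = 0) \<and> dotr m z (rv g) > 0"
proof -
  let ?r = "length ts"
  let ?G = "gram m ts"
  let ?t = "\<lambda>i j. real_of_int ((ts!i) j)"
  define D where "D = real_of_int (det ?G)"
  have D0: "D \<noteq> 0" using d by (simp add: D_def)
  define b where "b = (\<lambda>k. \<Sum>j<m. ?t k j * real_of_int (g j))"
  define w where "w = (\<lambda>i. (\<Sum>l<?r. real_of_int (adj_mat ?G $$ (i,l)) * b l) / D)"
  have Gr: "real_of_int (?G $$ (k,i)) = (\<Sum>j<m. ?t k j * ?t i j)" if "k < ?r" "i < ?r" for k i
    using that by (simp add: gram_index)
  have Gw: "(\<Sum>i<?r. (\<Sum>j<m. ?t k j * ?t i j) * w i) = b k" if k: "k < ?r" for k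
  proof -
    have "(\<Sum>i<?r. (\<Sum>j<m. ?t k j * ?t i j) * w i) = (\<Sum>i<?r. real_of_int (?G $$ (k,i)) * w i)"
      using k by (intro sum.cong refl) (simp add: Gr)
    also have "\<dots> = (\<Sum>i<?r. \<Sum>l<?r. real_of_int (?G $$ (k,i)) * real_of_int (adj_mat ?G $$ (i,l)) * b l) / D"
      unfolding w_def by (simp add: sum_divide_distrib sum_distrib_left mult.assoc)
    also have "\<dots> = (\<Sum>l<?r. (\<Sum>i<?r. real_of_int (?G $$ (k,i)) * real_of_int (adj_mat ?G $$ (i,l))) * b l) / D"
      by (subst sum.swap) (simp add: sum_distrib_right)
    also have "\<dots> = (\<Sum>l<?r. (if k = l then D * b l else 0)) / D"
    proof -
      have "(\<Sum>i<?r. real_of_int (?G $$ (k,i)) * real_of_int (adj_mat ?G $$ (i,l))) = (if k = l then D else 0)"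
        if l: "l < ?r" for l
      proof -
        have "(\<Sum>i<?r. real_of_int (?G $$ (k,i)) * real_of_int (adj_mat ?G $$ (i,l)))
            = real_of_int (\<Sum>i<?r. ?G $$ (k,i) * adj_mat ?G $$ (i,l))" by simp
        also have "\<dots> = (if k = l then D else 0)" using adj_entry1[OF gram_carrier k l] by (simp add: D_def)
        finally show ?thesis .
      qed
      then show ?thesis by (intro arg_cong[where f="\<lambda>x. x / D"] sum.cong refl) auto
    qed
    also have "\<dots> = b k" using k D0 by simp
    finally show ?thesis .
  qed
  define z where "z = (\<lambda>j. real_of_int (g j) - (\<Sum>i<?r. w i * ?t i j))"
  have zt: "dotr m z (rv (ts!k)) = 0" if k: "k < ?r" for k
  proof -
    have "dotr m z (rv (ts!k)) = (\<Sum>j<m. real_of_int (g j) * ?t k j) - (\<Sum>j<m. \<Sum>i<?r. w i * ?t i j * ?t k j)"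
      unfolding dotr_def z_def rv_def by (simp add: algebra_simps sum_subtractf sum_distrib_left sum_distrib_right)
    also have "(\<Sum>j<m. \<Sum>i<?r. w i * ?t i j * ?t k j) = (\<Sum>i<?r. (\<Sum>j<m. ?t k j * ?t i j) * w i)"
      by (subst sum.swap) (simp add: sum_distrib_right sum_distrib_left mult.commute mult.left_commute)
    also have "\<dots> = b k" using Gw[OF k] .
    finally show ?thesis by (simp add: b_def mult.commute)
  qed
  have "\<exists>j<m. z j \<noteq> 0"
  proof (rule ccontr)
    assume "\<not> (\<exists>j<m. z j \<noteq> 0)"
    then have "\<forall>j<m. real_of_int (g j) = (\<Sum>i<?r. w i * ?t i j)" by (auto simp: z_def)
    then have "inspan m ts g" unfolding inspan_def by blast
    then show False using ns by simp
  qed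
  then obtain j0 where j0: "j0 < m" "z j0 \<noteq> 0" by auto
  have "dotr m z (rv g) = (\<Sum>j<m. z j * z j) + (\<Sum>j<m. \<Sum>i<?r. z j * (w i * ?t i j))"
    unfolding dotr_def rv_def
    by (simp add: z_def algebra_simps sum_subtractf sum_distrib_left sum.distrib[symmetric])
  also have "(\<Sum>j<m. \<Sum>i<?r. z j * (w i * ?t i j)) = (\<Sum>i<?r. w i * dotr m z (rv (ts!i)))"
    unfolding dotr_def rv_def by (subst sum.swap) (simp add: sum_distrib_left algebra_simps)
  also have "\<dots> = 0" using zt by simp
  finally have e: "dotr m z (rv g) = (\<Sum>j<m. z j * z j)" by simp
  have "0 < z j0 * z j0" using j0 by (auto simp add: zero_less_mult_iff linorder_neq_iff)
  also have "\<dots> \<le> (\<Sum>j<m. z j * z j)"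
    using j0 by (intro member_le_sum) auto
  finally have "0 < dotr m z (rv g)" using e by simp
  then show ?thesis using zt by blast
qed

lemma dotr_lin: "dotr m (\<lambda>j. y j - s * z j) v = dotr m y v - s * dotr m z v"
  unfolding dotr_def by (simp add: algebra_simps sum_subtractf sum_distrib_left)

lemma det_gram_Nil: "det (gram m []) = 1"
  by (simp add: gram_def det_def)

lemma vertex:
  assumes fin: "finite G" and y0: "\<forall>g\<in>G. dotr m y0 (rv g) \<ge> 1"
  shows "\<exists>y ts. set ts \<subseteq> G \<and> (\<forall>i<length ts. dotr m y (rv (ts!i)) = 1) \<and> det (gram m ts) \<noteq> 0
     \<and> (\<forall>g\<in>G. dotr m y (rv g) \<ge> 1) \<and> (\<forall>g\<in>G. inspan m ts g)"
proof -
  define Q where "Q = (\<lambda>n. \<exists>y ts. length ts = n \<and> distinct ts \<and> set ts \<subseteq> G \<and>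
     (\<forall>i<length ts. dotr m y (rv (ts!i)) = 1) \<and> det (gram m ts) \<noteq> 0 \<and> (\<forall>g\<in>G. dotr m y (rv g) \<ge> 1))"
  have Q0: "Q 0" unfolding Q_def using y0 det_gram_Nil by (intro exI[of _ y0] exI[of _ "[]"]) auto
  have Qb: "\<forall>n. Q n \<longrightarrow> n \<le> card G"
  proof (intro allI impI)
    fix n assume "Q n"
    then obtain y ts where "length ts = n" "distinct ts" "set ts \<subseteq> G" unfolding Q_def by blast
    then show "n \<le> card G" using fin by (metis card_mono distinct_card)
  qed
  obtain n where Qn: "Q n" and nmax: "\<And>n'. Q n' \<Longrightarrow> n' \<le> n"
    using Nat.ex_has_greatest_nat[of Q 0 "card G"] Q0 Qb by blast
  from Qn obtain y ts where len: "length ts = n" and dist: "distinct ts" and sub: "set ts \<subseteq> G"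
    and tight: "\<forall>i<length ts. dotr m y (rv (ts!i)) = 1" and d: "det (gram m ts) \<noteq> 0"
    and feas: "\<forall>g\<in>G. dotr m y (rv g) \<ge> 1" unfolding Q_def by blast
  have "\<forall>g\<in>G. inspan m ts g"
  proof (rule ccontr)
    assume "\<not> (\<forall>g\<in>G. inspan m ts g)"
    then obtain g where g: "g \<in> G" "\<not> inspan m ts g" by auto
    obtain z where zt: "\<forall>i<length ts. dotr m z (rv (ts!i)) = 0" and zg: "dotr m z (rv g) > 0"
      using proj_exists[OF d g(2)] by blast
    define H where "H = {h\<in>G. dotr m z (rv h) > 0}"
    have fH: "finite H" using fin by (simp add: H_def)
    have gH: "g \<in> H" using g zg by (simp add: H_def)
    define ratio where "ratio = (\<lambda>h. (dotr m y (rv h) - 1) / dotr m z (rv h))"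
    define sm where "sm = Min (ratio ` H)"
    have "sm \<in> ratio ` H" unfolding sm_def using fH gH by (intro Min_in) auto
    then obtain hs where hs: "hs \<in> H" "ratio hs = sm" by auto
    have sm_le: "sm \<le> ratio h" if "h \<in> H" for h unfolding sm_def using fH that by (intro Min_le) auto
    have ratio_nn: "ratio h \<ge> 0" if "h \<in> H" for h
      using that feas unfolding ratio_def H_def by (auto intro!: divide_nonneg_pos)
    have sm0: "sm \<ge> 0" using hs ratio_nn by auto
    define y' where "y' = (\<lambda>j. y j - sm * z j)"
    have dy': "dotr m y' v = dotr m y v - sm * dotr m z v" for v unfolding y'_def by (rule dotr_lin)
    have feas': "\<forall>h\<in>G. dotr m y' (rv h) \<ge> 1"
    proof
      fix h assume h: "h \<in> G"
      show "dotr m y' (rv h) \<ge> 1"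
      proof (cases "dotr m z (rv h) > 0")
        case True
        then have "h \<in> H" using h by (simp add: H_def)
        then have "sm \<le> (dotr m y (rv h) - 1) / dotr m z (rv h)" using sm_le ratio_def by auto
        then have "sm * dotr m z (rv h) \<le> dotr m y (rv h) - 1" using True by (simp add: pos_le_divide_eq)
        then show ?thesis by (simp add: dy')
      next
        case False
        then have "sm * dotr m z (rv h) \<le> 0" using sm0 by (simp add: mult_nonneg_nonpos)
        moreover have "1 \<le> dotr m y (rv h)" using feas h by blast
        ultimately show ?thesis by (simp add: dy')
      qed
    qed
    have hs1: "dotr m y' (rv hs) = 1"
    proof -
      have zp: "dotr m z (rv hs) > 0" using hs by (simp add: H_def)
      have "sm * dotr m z (rv hs) = dotr m y (rv hs) - 1" using hs zp unfolding ratio_def by (metis nonzero_eq_divide_eq order_less_irrefl)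
      then show ?thesis by (simp add: dy')
    qed
    define ts' where "ts' = ts @ [hs]"
    have hsnot: "hs \<notin> set ts"
    proof
      assume "hs \<in> set ts"
      then obtain i where "i < length ts" "ts!i = hs" by (auto simp: in_set_conv_nth)
      then have "dotr m z (rv hs) = 0" using zt by auto
      then show False using hs by (simp add: H_def)
    qed
    have nth': "ts'!i = (if i < length ts then ts!i else hs)" if "i < Suc (length ts)" for i
      using that by (auto simp: ts'_def nth_append)
    have ind': "indepv m ts'"
      unfolding indepv_def
    proof (intro allI impI)
      fix \<alpha> :: "nat \<Rightarrow> real" and i
      assume h: "\<forall>j<m. (\<Sum>i<length ts'. \<alpha> i * real_of_int ((ts'!i) j)) = 0" and i: "i < length ts'"
      have h': "(\<Sum>i<length ts. \<alpha> i * real_of_int ((ts!i) j)) + \<alpha> (length ts) * real_of_int (hs j) = 0"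
        if "j < m" for j
      proof -
        have e1: "(\<Sum>i<length ts'. \<alpha> i * real_of_int ((ts'!i) j)) =
           (\<Sum>i<length ts. \<alpha> i * real_of_int ((ts'!i) j)) + \<alpha> (length ts) * real_of_int (hs j)"
          by (simp add: ts'_def)
        have e2: "(\<Sum>i<length ts. \<alpha> i * real_of_int ((ts'!i) j)) = (\<Sum>i<length ts. \<alpha> i * real_of_int ((ts!i) j))"
          by (intro sum.cong refl) (simp add: ts'_def nth_append)
        have "(\<Sum>i<length ts'. \<alpha> i * real_of_int ((ts'!i) j)) = 0" using h that by blast
        then show ?thesis using e1 e2 by simp
      qed
      have "0 = (\<Sum>j<m. z j * ((\<Sum>i<length ts. \<alpha> i * real_of_int ((ts!i) j)) + \<alpha> (length ts) * real_of_int (hs j)))"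
        using h' by simp
      also have "\<dots> = (\<Sum>i<length ts. \<alpha> i * dotr m z (rv (ts!i))) + \<alpha> (length ts) * dotr m z (rv hs)"
        unfolding dotr_def rv_def
        by (simp add: sum.distrib distrib_left sum_distrib_left sum.swap[of _ "{..<m}"] algebra_simps)
      also have "\<dots> = \<alpha> (length ts) * dotr m z (rv hs)" using zt by simp
      finally have "\<alpha> (length ts) = 0" using hs by (simp add: H_def)
      then have h0: "\<forall>j<m. (\<Sum>i<length ts. \<alpha> i * real_of_int ((ts!i) j)) = 0" using h' by simp
      have "\<forall>i<length ts. \<alpha> i = 0"
        using det_ne0_indepv[OF d] h0 unfolding indepv_def by (rule_tac mp[OF spec[where x=\<alpha>]]) auto
      then show "\<alpha> i = 0" using i \<open>\<alpha> (length ts) = 0\<close> by (cases "i < length ts") (auto simp: ts'_def less_Suc_eq)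
    qed
    have "Q (Suc n)"
      unfolding Q_def
    proof (intro exI[of _ y'] exI[of _ ts'] conjI)
      show "length ts' = Suc n" using len by (simp add: ts'_def)
      show "distinct ts'" using dist hsnot by (simp add: ts'_def)
      show "set ts' \<subseteq> G" using sub hs by (auto simp: ts'_def H_def)
      show "\<forall>i<length ts'. dotr m y' (rv (ts'!i)) = 1"
      proof (intro allI impI)
        fix i assume i: "i < length ts'"
        show "dotr m y' (rv (ts'!i)) = 1"
        proof (cases "i < length ts")
          case True
          then show ?thesis using tight zt by (simp add: ts'_def nth_append dy')
        next
          case False
          then have "i = length ts" using i by (simp add: ts'_def)
          then show ?thesis using hs1 by (simp add: ts'_def)
        qed
      qed
      show "det (gram m ts') \<noteq> 0" using indepv_det_ne0[OF ind'] .
      show "\<forall>g\<in>G. 1 \<le> dotr m y' (rv g)" using feas' by simp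
    qed
    then show False using nmax by fastforce
  qed
  then show ?thesis using sub tight d feas by blast
qed

lemma det_bound_int:
  assumes A: "(A :: int mat) \<in> carrier_mat n n" and B: "\<And>i j. i < n \<Longrightarrow> j < n \<Longrightarrow> \<bar>A $$ (i,j)\<bar> \<le> b"
  shows "\<bar>det A\<bar> \<le> int (fact n) * b ^ n"
proof -
  have "\<bar>det A\<bar> = \<bar>\<Sum>p\<in>{p. p permutes {0..<n}}. signof p * (\<Prod>i = 0..<n. A $$ (i, p i))\<bar>"
    using det_def'[OF A] by simp
  also have "\<dots> \<le> (\<Sum>p\<in>{p. p permutes {0..<n}}. \<bar>signof p * (\<Prod>i = 0..<n. A $$ (i, p i))\<bar>)"
    by (rule sum_abs)
  also have "\<dots> \<le> (\<Sum>p\<in>{p. p permutes {0..<n}}. b ^ n)"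
  proof (rule sum_mono)
    fix p assume "p \<in> {p. p permutes {0..<n}}"
    then have p: "p permutes {0..<n}" by simp
    have "\<bar>signof p * (\<Prod>i = 0..<n. A $$ (i, p i))\<bar> = (\<Prod>i = 0..<n. \<bar>A $$ (i, p i)\<bar>)"
      by (simp add: abs_mult abs_prod sign_def)
    also have "\<dots> \<le> (\<Prod>i = 0..<n. b)"
    proof (rule prod_mono)
      fix i assume i: "i \<in> {0..<n}"
      then have "p i \<in> {0..<n}" using permutes_in_image[OF p] by simp
      then have "\<bar>A $$ (i, p i)\<bar> \<le> b" using B i by simp
      then show "0 \<le> \<bar>A $$ (i, p i)\<bar> \<and> \<bar>A $$ (i, p i)\<bar> \<le> b" by simp
    qed
    also have "\<dots> = b ^ n" by simp
    finally show "\<bar>signof p * (\<Prod>i = 0..<n. A $$ (i, p i))\<bar> \<le> b ^ n" .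
  qed
  also have "\<dots> = int (fact n) * b ^ n"
    by (simp add: card_permutations[of "{0..<n}" n])
  finally show ?thesis .
qed

lemma int_sep:
  assumes sub: "set ts \<subseteq> G" and tight: "\<forall>i<length ts. dotr m y (rv (ts!i)) = 1"
    and d: "det (gram m ts) \<noteq> 0" and feas: "\<forall>g\<in>G. dotr m y (rv g) \<ge> 1"
    and sp: "\<forall>g\<in>G. inspan m ts g"
    and R: "\<forall>g\<in>G. \<forall>j<m. \<bar>g j\<bar> \<le> R" and R1: "R \<ge> 1"
  shows "\<exists>Y::nat\<Rightarrow>int. (\<forall>g\<in>G. (\<Sum>j<m. Y j * g j) \<ge> 1) \<and>
     (\<forall>j<m. \<bar>Y j\<bar> \<le> int (m * fact m) * R * (int m * R^2) ^ (m - 1))"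
proof -
  let ?r = "length ts"
  let ?G = "gram m ts"
  let ?adj = "adj_mat ?G"
  define sg where "sg = sgn (det ?G)"
  define S where "S = (\<lambda>i. \<Sum>l<?r. ?adj $$ (i,l))"
  define Y where "Y = (\<lambda>j. sg * (\<Sum>i<?r. (ts!i) j * S i))"
  have Yt: "(\<Sum>j<m. Y j * (ts!k) j) = \<bar>det ?G\<bar>" if k: "k < ?r" for k
  proof -
    have s1: "(\<Sum>j<m. Y j * (ts!k) j) = sg * (\<Sum>j<m. \<Sum>i<?r. (ts!i) j * S i * (ts!k) j)"
      by (simp add: Y_def sum_distrib_left sum_distrib_right mult.assoc)
    have s2: "(\<Sum>j<m. \<Sum>i<?r. (ts!i) j * S i * (ts!k) j) = (\<Sum>i<?r. \<Sum>j<m. (ts!i) j * S i * (ts!k) j)"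
      by (rule sum.swap)
    have s3: "(\<Sum>i<?r. \<Sum>j<m. (ts!i) j * S i * (ts!k) j) = (\<Sum>i<?r. ?G $$ (k,i) * S i)"
    proof (rule sum.cong[OF refl])
      fix i assume "i \<in> {..<?r}"
      then show "(\<Sum>j<m. (ts!i) j * S i * (ts!k) j) = ?G $$ (k,i) * S i"
        using k by (simp add: gram_index sum_distrib_left algebra_simps)
    qed
    have s4: "(\<Sum>i<?r. ?G $$ (k,i) * S i) = (\<Sum>l<?r. \<Sum>i<?r. ?G $$ (k,i) * ?adj $$ (i,l))"
      unfolding S_def sum_distrib_left by (rule sum.swap)
    have s5: "(\<Sum>l<?r. \<Sum>i<?r. ?G $$ (k,i) * ?adj $$ (i,l)) = det ?G"
      using adj_entry1[OF gram_carrier k] k by simp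
    have "sg * det ?G = \<bar>det ?G\<bar>" by (metis sg_def abs_sgn mult.commute)
    then show ?thesis using s1 s2 s3 s4 s5 by simp
  qed
  have sep: "(\<Sum>j<m. Y j * g j) \<ge> 1" if g: "g \<in> G" for g
  proof -
    obtain \<alpha> where \<alpha>: "\<forall>j<m. real_of_int (g j) = (\<Sum>i<?r. \<alpha> i * real_of_int ((ts!i) j))"
      using sp g unfolding inspan_def by blast
    have "real_of_int (\<Sum>j<m. Y j * g j) = (\<Sum>j<m. real_of_int (Y j) * (\<Sum>i<?r. \<alpha> i * real_of_int ((ts!i) j)))"
      using \<alpha> by simp
    also have "\<dots> = (\<Sum>i<?r. \<alpha> i * real_of_int (\<Sum>j<m. Y j * (ts!i) j))"
      by (simp only: of_int_sum of_int_mult sum_distrib_left sum_distrib_right) (subst sum.swap, simp add: algebra_simps)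
    also have "\<dots> = (\<Sum>i<?r. \<alpha> i) * real_of_int \<bar>det ?G\<bar>"
      by (simp add: Yt sum_distrib_right)
    finally have e1: "real_of_int (\<Sum>j<m. Y j * g j) = (\<Sum>i<?r. \<alpha> i) * real_of_int \<bar>det ?G\<bar>" .
    have "dotr m y (rv g) = (\<Sum>j<m. y j * (\<Sum>i<?r. \<alpha> i * real_of_int ((ts!i) j)))"
      unfolding dotr_def rv_def using \<alpha> by simp
    also have "\<dots> = (\<Sum>i<?r. \<alpha> i * dotr m y (rv (ts!i)))"
      unfolding dotr_def rv_def by (simp only: sum_distrib_left sum_distrib_right) (subst sum.swap, simp add: algebra_simps)
    also have "\<dots> = (\<Sum>i<?r. \<alpha> i)" using tight by simp
    finally have "(\<Sum>i<?r. \<alpha> i) \<ge> 1" using feas g by force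
    moreover have "real_of_int \<bar>det ?G\<bar> \<ge> 1" using d by simp
    ultimately have "(\<Sum>i<?r. \<alpha> i) * real_of_int \<bar>det ?G\<bar> \<ge> 1 * 1"
      by (intro mult_mono) auto
    then have "real_of_int (\<Sum>j<m. Y j * g j) \<ge> 1" using e1 by simp
    then show ?thesis by (simp only: of_int_le_iff[symmetric, where ?'a=real])
  qed
  have tsG: "ts!i \<in> G" if "i < ?r" for i using sub nth_mem[OF that] by auto
  have tR: "\<bar>(ts!i) j\<bar> \<le> R" if "i < ?r" "j < m" for i j using R tsG[OF that(1)] that(2) by auto
  have bound: "\<bar>Y j\<bar> \<le> int (m * fact m) * R * (int m * R^2) ^ (m - 1)" if j: "j < m" for j
  proof (cases "?r = 0")
    case True
    then have "Y j = 0" by (simp add: Y_def S_def)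
    then show ?thesis using R1 by simp
  next
    case False
    have rm: "?r \<le> m" using det_ne0_len[OF d] .
    define Bd where "Bd = int m * R^2"
    have R2: "R^2 \<ge> 1" using R1 by (simp add: one_le_power)
    have m1: "int m \<ge> 1" using j by simp
    have "1 * 1 \<le> int m * R^2" by (rule mult_mono) (use R2 m1 in auto)
    then have Bd1: "Bd \<ge> 1" by (simp add: Bd_def)
    have Gb: "\<bar>?G $$ (i,k)\<bar> \<le> Bd" if ik: "i < ?r" "k < ?r" for i k
    proof -
      have "\<bar>?G $$ (i,k)\<bar> = \<bar>\<Sum>j<m. (ts!i) j * (ts!k) j\<bar>" using ik by (simp add: gram_index)
      also have "\<dots> \<le> (\<Sum>j<m. \<bar>(ts!i) j * (ts!k) j\<bar>)" by (rule sum_abs)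
      also have "\<dots> \<le> (\<Sum>j<m. R * R)"
      proof (rule sum_mono)
        fix j assume "j \<in> {..<m}"
        then have "\<bar>(ts!i) j\<bar> \<le> R" "\<bar>(ts!k) j\<bar> \<le> R" using tR ik by auto
        then show "\<bar>(ts!i) j * (ts!k) j\<bar> \<le> R * R" unfolding abs_mult by (intro mult_mono) auto
      qed
      also have "\<dots> = Bd" by (simp add: Bd_def power2_eq_square)
      finally show ?thesis .
    qed
    have adjb: "\<bar>?adj $$ (i,l)\<bar> \<le> int (fact (?r - 1)) * Bd ^ (?r - 1)" if il: "i < ?r" "l < ?r" for i l
    proof -
      have "?adj $$ (i,l) = cofactor ?G l i" using il by (simp add: adj_mat_def gram_def)
      also have "\<dots> = (-1)^(l+i) * det (mat_delete ?G l i)" by (simp add: cofactor_def)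
      finally have "\<bar>?adj $$ (i,l)\<bar> = \<bar>det (mat_delete ?G l i)\<bar>" by (simp add: abs_mult)
      also have "\<dots> \<le> int (fact (?r - 1)) * Bd ^ (?r - 1)"
      proof (rule det_bound_int)
        show "mat_delete ?G l i \<in> carrier_mat (?r - 1) (?r - 1)" using mat_delete_carrier[OF gram_carrier] .
        fix a b assume ab: "a < ?r - 1" "b < ?r - 1"
        have e: "mat_delete ?G l i $$ (a, b) = ?G $$ (if a < l then a else Suc a, if b < i then b else Suc b)"
          using ab by (simp add: mat_delete_def gram_def)
        show "\<bar>mat_delete ?G l i $$ (a, b)\<bar> \<le> Bd"
          unfolding e using ab by (intro Gb) auto
      qed
      finally show ?thesis .
    qed
    define C where "C = int (fact (?r - 1)) * Bd ^ (?r - 1)"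
    have C0: "C \<ge> 0" using Bd1 by (simp add: C_def)
    have "sg = 1 \<or> sg = -1" using d by (auto simp: sg_def sgn_if)
    then have "\<bar>sg\<bar> = 1" by auto
    then have "\<bar>Y j\<bar> = \<bar>\<Sum>i<?r. (ts!i) j * S i\<bar>"
      by (simp add: Y_def abs_mult)
    also have "\<dots> \<le> (\<Sum>i<?r. \<bar>(ts!i) j * S i\<bar>)" by (rule sum_abs)
    also have "\<dots> \<le> (\<Sum>i<?r. R * (int ?r * C))"
    proof (rule sum_mono)
      fix i assume i: "i \<in> {..<?r}"
      have "\<bar>S i\<bar> \<le> (\<Sum>l<?r. \<bar>?adj $$ (i,l)\<bar>)" unfolding S_def by (rule sum_abs)
      also have "\<dots> \<le> (\<Sum>l<?r. C)" using adjb i by (intro sum_mono) (auto simp: C_def)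
      also have "\<dots> = int ?r * C" by simp
      finally have "\<bar>S i\<bar> \<le> int ?r * C" .
      moreover have "\<bar>(ts!i) j\<bar> \<le> R" using tR i j by auto
      ultimately show "\<bar>(ts!i) j * S i\<bar> \<le> R * (int ?r * C)" unfolding abs_mult
        by (intro mult_mono) (use R1 in auto)
    qed
    also have "\<dots> = int ?r * R * (int ?r * int (fact (?r - 1))) * Bd ^ (?r - 1)"
      by (simp add: C_def mult.assoc mult.left_commute)
    also have "int ?r * int (fact (?r - 1)) = int (fact ?r)"
    proof -
      have "?r * fact (?r - 1) = fact ?r" using False by (cases ?r) auto
      then show ?thesis by (simp only: of_nat_mult[symmetric])
    qed
    also have "int ?r * R * int (fact ?r) * Bd ^ (?r - 1) \<le> int m * R * int (fact m) * Bd ^ (m - 1)"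
    proof -
      have f1: "int ?r * R \<le> int m * R" using rm R1 by simp
      have f2: "int (fact ?r) \<le> int (fact m)" using rm by (simp add: fact_mono)
      have f3: "Bd ^ (?r - 1) \<le> Bd ^ (m - 1)" using rm Bd1 by (intro power_increasing) auto
      have f4: "0 \<le> int ?r * R" using R1 by simp
      have f5: "int ?r * R * int (fact ?r) \<le> int m * R * int (fact m)"
        by (rule mult_mono'[OF f1 f2 f4]) simp
      have f6: "0 \<le> int ?r * R * int (fact ?r)" using f4 by simp
      have f7: "0 \<le> Bd ^ (?r - 1)" using Bd1 by simp
      show ?thesis by (rule mult_mono'[OF f5 f3 f6 f7])
    qed
    also have "int m * R * int (fact m) * Bd ^ (m - 1) = int (m * fact m) * R * (int m * R^2) ^ (m - 1)"
      by (simp add: Bd_def mult.assoc mult.left_commute)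
    finally show ?thesis .
  qed
  show ?thesis using sep bound by blast
qed

lemma rv_inj: "inj_on rv G"
  by (rule inj_onI) (auto simp: rv_def fun_eq_iff)

lemma qgordan:
  fixes G :: "(nat \<Rightarrow> int) set"
  assumes fin: "finite G" and R: "\<forall>g\<in>G. \<forall>j<m. \<bar>g j\<bar> \<le> R" and R1: "R \<ge> 1"
  shows "(\<exists>lam::(nat\<Rightarrow>int)\<Rightarrow>real. (\<forall>g\<in>G. lam g \<ge> 0) \<and> (\<exists>g\<in>G. lam g > 0) \<and>
            (\<forall>j<m. (\<Sum>g\<in>G. lam g * real_of_int (g j)) = 0))
       \<or> (\<exists>Y::nat\<Rightarrow>int. (\<forall>g\<in>G. (\<Sum>j<m. Y j * g j) \<ge> 1) \<and>
            (\<forall>j<m. \<bar>Y j\<bar> \<le> int (m * fact m) * R * (int m * R^2) ^ (m - 1)))"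
proof -
  have finr: "finite (rv ` G)" using fin by simp
  from fm_gordan[OF finr, of m] show ?thesis
  proof
    assume "\<exists>y. \<forall>g\<in>rv ` G. 0 < dotr m y g"
    then obtain y where y: "\<And>g. g \<in> G \<Longrightarrow> 0 < dotr m y (rv g)" by auto
    show ?thesis
    proof (cases "G = {}")
      case True
      have "0 \<le> int (m * fact m) * R * (int m * R^2) ^ (m - 1)" using R1 by simp
      then show ?thesis using True by (intro disjI2 exI[of _ "\<lambda>_. 0"]) auto
    next
      case False
      define eps where "eps = Min ((\<lambda>g. dotr m y (rv g)) ` G)"
      have "eps \<in> (\<lambda>g. dotr m y (rv g)) ` G" unfolding eps_def using fin False by (intro Min_in) auto
      then have eps0: "eps > 0" using y by auto
      have epsle: "eps \<le> dotr m y (rv g)" if "g \<in> G" for g unfolding eps_def using fin that by (intro Min_le) auto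
      define y0 where "y0 = (\<lambda>j. y j / eps)"
      have "dotr m y0 v = dotr m y v / eps" for v unfolding y0_def dotr_def by (simp add: sum_divide_distrib)
      then have y0: "\<forall>g\<in>G. dotr m y0 (rv g) \<ge> 1" using epsle eps0 by (simp add: le_divide_eq)
      obtain y' ts where "set ts \<subseteq> G" "\<forall>i<length ts. dotr m y' (rv (ts!i)) = 1" "det (gram m ts) \<noteq> 0"
        "\<forall>g\<in>G. dotr m y' (rv g) \<ge> 1" "\<forall>g\<in>G. inspan m ts g"
        using vertex[OF fin y0] by blast
      from int_sep[OF this R R1] show ?thesis by blast
    qed
  next
    assume "\<exists>lam. (\<forall>g\<in>rv ` G. 0 \<le> lam g) \<and> (\<exists>g\<in>rv ` G. 0 < lam g) \<and> (\<forall>j<m. (\<Sum>g\<in>rv ` G. lam g * g j) = 0)"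
    then obtain lam where l1: "\<forall>g\<in>rv ` G. 0 \<le> lam g" and l2: "\<exists>g\<in>rv ` G. 0 < lam g"
      and l3: "\<forall>j<m. (\<Sum>g\<in>rv ` G. lam g * g j) = 0" by blast
    have "\<forall>j<m. (\<Sum>g\<in>G. lam (rv g) * real_of_int (g j)) = 0"
    proof (intro allI impI)
      fix j assume j: "j < m"
      have "(\<Sum>g\<in>rv ` G. lam g * g j) = (\<Sum>g\<in>G. lam (rv g) * rv g j)"
        by (rule sum.reindex[OF rv_inj, unfolded comp_def])
      then show "(\<Sum>g\<in>G. lam (rv g) * real_of_int (g j)) = 0" using l3 j by (simp add: rv_def)
    qed
    moreover have "\<forall>g\<in>G. 0 \<le> lam (rv g)" using l1 by auto
    moreover have "\<exists>g\<in>G. 0 < lam (rv g)" using l2 by auto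
    ultimately have "\<exists>lam::(nat\<Rightarrow>int)\<Rightarrow>real. (\<forall>g\<in>G. lam g \<ge> 0) \<and> (\<exists>g\<in>G. lam g > 0) \<and> (\<forall>j<m. (\<Sum>g\<in>G. lam g * real_of_int (g j)) = 0)"
      by (intro exI[of _ "\<lambda>g. lam (rv g)"]) simp
    then show ?thesis by (rule disjI1)
  qed
qed

lemma mat_fin: "matroid E indep \<Longrightarrow> indep X \<Longrightarrow> finite X"
  unfolding matroid_def by (meson finite_subset)

lemma mat_E: "matroid E indep \<Longrightarrow> indep X \<Longrightarrow> X \<subseteq> E"
  unfolding matroid_def by blast

lemma mat_sub: "matroid E indep \<Longrightarrow> indep X \<Longrightarrow> Y \<subseteq> X \<Longrightarrow> indep Y"
  unfolding matroid_def by blast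

lemma mat_exch: "matroid E indep \<Longrightarrow> indep X \<Longrightarrow> indep Y \<Longrightarrow> card X < card Y \<Longrightarrow> \<exists>y\<in>Y - X. indep (insert y X)"
  unfolding matroid_def by blast

lemma augment:
  assumes M: "matroid E indep" and X: "indep X" and Y: "indep Y" and n: "card X \<le> n" "n \<le> card Y"
  shows "\<exists>Z. Z \<subseteq> Y - X \<and> card Z = n - card X \<and> indep (X \<union> Z)"
  using X n
proof (induction "n - card X" arbitrary: X)
  case 0
  then show ?case by (intro exI[of _ "{}"]) auto
next
  case (Suc d)
  have fX: "finite X" using mat_fin[OF M Suc.prems(1)] .
  have "card X < card Y" using Suc by linarith
  then obtain y where y: "y \<in> Y - X" "indep (insert y X)" using mat_exch[OF M Suc.prems(1) Y] by blast
  have cX': "card (insert y X) = Suc (card X)" using y fX by simp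
  have "d = n - card (insert y X)" using Suc.hyps(2) cX' by simp
  moreover have "card (insert y X) \<le> n" using Suc.hyps(2) cX' by simp
  ultimately obtain Z where Z: "Z \<subseteq> Y - insert y X" "card Z = n - card (insert y X)" "indep (insert y X \<union> Z)"
    using Suc.hyps(1) y(2) Suc.prems(3) by blast
  have fZ: "finite Z" using mat_fin[OF M Z(3)] by simp
  have "y \<notin> Z" using Z(1) by auto
  then have "card (insert y Z) = Suc (card Z)" using fZ by simp
  moreover have "X \<union> insert y Z = insert y X \<union> Z" by auto
  ultimately show ?case using Z y cX' Suc.hyps(2) by (intro exI[of _ "insert y Z"]) auto
qed

definition colL :: "nat \<Rightarrow> ('a \<Rightarrow> nat \<Rightarrow> int) \<Rightarrow> 'a \<Rightarrow> int list" where
  "colL m W e = map (W e) [0..<m]"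

lemma colL_eq: "colL m W a = colL m W b \<longleftrightarrow> (\<forall>j<m. W a j = W b j)"
  unfolding colL_def by (auto simp: list_eq_iff_nth_eq)

lemma pigeon:
  assumes fS: "finite S" and ne: "S \<noteq> {}" and SE: "S \<subseteq> E"
    and bnd: "\<forall>e\<in>E. \<forall>j<m. - \<Delta> \<le> W e j \<and> W e j \<le> \<Delta>"
  shows "\<exists>S'. S' \<subseteq> S \<and> unicolor m W S' \<and> real (card S) \<le> real (nat (2*\<Delta>+1) ^ m) * real (card S')"
proof -
  let ?C = "colL m W ` S"
  let ?F = "\<lambda>c. {e\<in>S. colL m W e = c}"
  have sub: "?C \<subseteq> {xs. set xs \<subseteq> {-\<Delta>..\<Delta>} \<and> length xs = m}"
  proof
    fix xs assume "xs \<in> ?C"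
    then obtain e where e: "e \<in> S" "xs = colL m W e" by auto
    then have eE: "e \<in> E" using SE by auto
    have "set xs \<subseteq> {-\<Delta>..\<Delta>}"
    proof
      fix x assume "x \<in> set xs"
      then obtain j where "j < m" "x = W e j" using e by (auto simp: colL_def)
      then show "x \<in> {-\<Delta>..\<Delta>}" using bnd eE by simp
    qed
    then show "xs \<in> {xs. set xs \<subseteq> {-\<Delta>..\<Delta>} \<and> length xs = m}" using e by (simp add: colL_def)
  qed
  have cC: "card ?C \<le> nat (2*\<Delta>+1) ^ m"
  proof -
    have "card ?C \<le> card {xs. set xs \<subseteq> {-\<Delta>..\<Delta>} \<and> length xs = m}"
      by (rule card_mono[OF _ sub]) (rule finite_lists_length_eq, simp)
    also have "\<dots> = nat (2*\<Delta>+1) ^ m" by (subst card_lists_length_eq) simp_all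
    finally show ?thesis .
  qed
  have fC: "finite ?C" using fS by simp
  have neC: "?C \<noteq> {}" using ne by simp
  have SU: "S = (\<Union>c\<in>?C. ?F c)" by blast
  have "card (\<Union>c\<in>?C. ?F c) = (\<Sum>c\<in>?C. card (?F c))"
    by (rule card_UN_disjoint) (use fS fC in auto)
  then have cS: "card S = (\<Sum>c\<in>?C. card (?F c))" using SU by simp
  define Mx where "Mx = Max ((\<lambda>c. card (?F c)) ` ?C)"
  have "Mx \<in> (\<lambda>c. card (?F c)) ` ?C" unfolding Mx_def using fC neC by (intro Max_in) auto
  then obtain c where c: "c \<in> ?C" "card (?F c) = Mx" by auto
  have "card S \<le> (\<Sum>c\<in>?C. Mx)" unfolding cS
  proof (rule sum_mono)
    fix c' assume "c' \<in> ?C"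
    then show "card (?F c') \<le> Mx" unfolding Mx_def using fC by (intro Max_ge) auto
  qed
  also have "\<dots> = card ?C * Mx" by simp
  also have "\<dots> \<le> nat (2*\<Delta>+1) ^ m * Mx" using cC by simp
  finally have "card S \<le> nat (2*\<Delta>+1) ^ m * card (?F c)" using c by simp
  then have f1: "real (card S) \<le> real (nat (2*\<Delta>+1) ^ m) * real (card (?F c))"
    by (simp only: of_nat_le_iff of_nat_mult[symmetric])
  have f2: "unicolor m W (?F c)" unfolding unicolor_def
  proof (intro ballI allI impI)
    fix a b j assume "a \<in> ?F c" "b \<in> ?F c" "j < m"
    then have "colL m W a = colL m W b" by simp
    then show "W a j = W b j" using colL_eq[of m W a b] \<open>j < m\<close> by simp
  qed
  have f3: "?F c \<subseteq> S" by auto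
  show ?thesis using f1 f2 f3 by (intro exI[of _ "?F c"]) simp
qed

lemma unicolor_sub: "unicolor m W S \<Longrightarrow> T \<subseteq> S \<Longrightarrow> unicolor m W T"
  unfolding unicolor_def by blast

lemma KL:
  assumes M: "matroid E indep"
    and bnd: "\<forall>e\<in>E. \<forall>j<m. - \<Delta> \<le> W e j \<and> W e j \<le> \<Delta>"
    and A: "indep A" and B: "indep B" and AB: "A \<inter> B = {}" and cA: "card A = k" and cB: "card B = k"
    and Ahi: "Ahi \<subseteq> A" and Bs: "Bs \<subseteq> B" and tau: "tau > 0"
    and N: "N = real (nat (2*\<Delta>+1) ^ m)" and N1: "N \<ge> 1"
    and bad: "\<And>A' B'. A' \<subseteq> A - Ahi \<Longrightarrow> B' \<subseteq> Bs \<Longrightarrow> unicolor m W A' \<Longrightarrow> unicolor m W B' \<Longrightarrow>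
              card A' = card B' \<Longrightarrow> indep ((A - A') \<union> B') \<Longrightarrow> real (card A') \<ge> tau \<Longrightarrow> False"
  shows "real (card Bs) < real (card Ahi) + N^2 * tau"
proof (rule ccontr)
  assume "\<not> real (card Bs) < real (card Ahi) + N^2 * tau"
  then have big: "real (card Bs) \<ge> real (card Ahi) + N^2 * tau" by simp
  have fA: "finite A" using mat_fin[OF M A] .
  have fB: "finite B" using mat_fin[OF M B] .
  have AE: "A \<subseteq> E" using mat_E[OF M A] .
  have BE: "B \<subseteq> E" using mat_E[OF M B] .
  have iAhi: "indep Ahi" using mat_sub[OF M A Ahi] .
  have iBs: "indep Bs" using mat_sub[OF M B Bs] .
  have fAhi: "finite Ahi" using fA Ahi finite_subset by blast
  have fBs: "finite Bs" using fB Bs finite_subset by blast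
  have cBsk: "card Bs \<le> k" using card_mono[OF fB Bs] cB by simp
  have cAhik: "card Ahi \<le> k" using card_mono[OF fA Ahi] cA by simp
  have Nt: "N^2 * tau > 0" using N1 tau by simp
  have lt: "card Ahi < card Bs" using big Nt by linarith
  obtain B1 where B1: "B1 \<subseteq> Bs - Ahi" "card B1 = card Bs - card Ahi" "indep (Ahi \<union> B1)"
    using augment[OF M iAhi iBs, of "card Bs"] lt by auto
  have rB1: "real (card B1) \<ge> N^2 * tau" using B1(2) big lt by (simp add: of_nat_diff)
  have fB1: "finite B1" using fBs B1(1) finite_subset by blast
  have neB1: "B1 \<noteq> {}" using rB1 Nt by auto
  obtain B2 where B2: "B2 \<subseteq> B1" "unicolor m W B2" "real (card B1) \<le> N * real (card B2)"
    using pigeon[OF fB1 neB1 _ bnd] B1(1) Bs BE N by blast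
  have fB2: "finite B2" using fB1 B2(1) finite_subset by blast
  have iAB2: "indep (Ahi \<union> B2)" using mat_sub[OF M B1(3)] B2(1) by blast
  have dAB2: "Ahi \<inter> B2 = {}" using Ahi B2(1) B1(1) Bs AB by blast
  have cAB2: "card (Ahi \<union> B2) = card Ahi + card B2" using card_Un_disjoint[OF fAhi fB2 dAB2] .
  have cB2B1: "card B2 \<le> card B1" using card_mono[OF fB1 B2(1)] .
  have cAB2k: "card (Ahi \<union> B2) \<le> k" using cAB2 cB2B1 B1(2) cBsk lt by linarith
  obtain Z where Z: "Z \<subseteq> A - (Ahi \<union> B2)" "card Z = k - card (Ahi \<union> B2)" "indep ((Ahi \<union> B2) \<union> Z)"
    using augment[OF M iAB2 A, of k] cAB2k cA by auto
  define R where "R = (A - Ahi) - Z"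
  have ZA: "Z \<subseteq> A - Ahi" using Z(1) by blast
  have fZ: "finite Z" using fA ZA finite_subset by blast
  have cAmAhi: "card (A - Ahi) = k - card Ahi" using card_Diff_subset[OF fAhi Ahi] cA by simp
  have cR: "card R = card B2"
    unfolding R_def using card_Diff_subset[OF fZ ZA] cAmAhi Z(2) cAB2 cAB2k by simp
  have RA: "R \<subseteq> A - Ahi" unfolding R_def by blast
  have AmR: "A - R = Ahi \<union> Z" unfolding R_def using Ahi ZA by blast
  have iJ: "indep ((A - R) \<union> B2)" using Z(3) AmR by (simp add: Un_ac)
  have cB2pos: "card B2 > 0"
  proof -
    have "N * real (card B2) \<ge> N^2 * tau" using rB1 B2(3) by linarith
    show ?thesis
    proof (rule ccontr)
      assume "\<not> card B2 > 0"
      then have "card B2 = 0" by simp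
      then show False using \<open>N * real (card B2) \<ge> N^2 * tau\<close> Nt by simp
    qed
  qed
  have fR: "finite R" using fA RA finite_subset by blast
  have neR: "R \<noteq> {}" using cR cB2pos by auto
  obtain A3 where A3: "A3 \<subseteq> R" "unicolor m W A3" "real (card R) \<le> N * real (card A3)"
    using pigeon[OF fR neR _ bnd] RA AE N by blast
  have A3A: "A3 \<subseteq> A" using A3(1) RA by blast
  have fA3: "finite A3" using fR A3(1) finite_subset by blast
  have iI1: "indep (A - A3)" using mat_sub[OF M A] by blast
  have cI1: "card (A - A3) = k - card A3" using card_Diff_subset[OF fA3 A3A] cA by simp
  have dAR: "(A - R) \<inter> B2 = {}" using B2(1) B1(1) Bs AB by blast
  have fAmR: "finite (A - R)" using fA by simp
  have cRA: "card R \<le> k" using card_mono[OF fA] RA cA by (meson Diff_subset order_trans)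
  have cJ: "card ((A - R) \<union> B2) = k"
  proof -
    have RA': "R \<subseteq> A" using RA by blast
    have "card (A - R) = k - card R" using card_Diff_subset[OF fR RA'] cA by simp
    then show ?thesis using card_Un_disjoint[OF fAmR fB2 dAR] cR cRA by simp
  qed
  have cA3R: "card A3 \<le> card R" using card_mono[OF fR A3(1)] .
  obtain B3 where B3: "B3 \<subseteq> ((A - R) \<union> B2) - (A - A3)" "card B3 = k - card (A - A3)" "indep ((A - A3) \<union> B3)"
    using augment[OF M iI1 iJ, of k] cI1 cJ by auto
  have B3B2: "B3 \<subseteq> B2" using B3(1) A3(1) by blast
  have cB3: "card B3 = card A3" using B3(2) cI1 cA3R cRA by simp
  have "real (card B2) \<le> N * real (card A3)" using A3(3) cR by simp
  then have "N * real (card B2) \<le> N * (N * real (card A3))" using N1 by (intro mult_left_mono) auto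
  then have "real (card B1) \<le> N * (N * real (card A3))" using B2(3) by linarith
  then have "N^2 * tau \<le> N^2 * real (card A3)" using rB1 by (simp add: power2_eq_square mult.assoc)
  then have tA3: "tau \<le> real (card A3)" using N1 by simp
  show False
    by (rule bad[of A3 B3]) (use A3 RA B3B2 B2 B1 cB3 B3(3) tA3 unicolor_sub in auto)
qed

lemma sum_ind_card: "finite X \<Longrightarrow> (\<Sum>x\<in>X. if P x then (1::real) else 0) = real (card {x\<in>X. P x})"
  by (simp add: sum.inter_filter[symmetric])

lemma layer_sum:
  fixes g :: "'a \<Rightarrow> nat"
  assumes fX: "finite X" and gT: "\<forall>x\<in>X. g x \<le> T"
  shows "(\<Sum>x\<in>X. real (g x)) = (\<Sum>s\<in>{1..T}. real (card {x\<in>X. g x \<ge> s}))"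
proof -
  have "real (g x) = (\<Sum>s\<in>{1..T}. if s \<le> g x then 1 else 0)" if "x \<in> X" for x
  proof -
    have "(\<Sum>s\<in>{1..T}. if s \<le> g x then (1::real) else 0) = real (card {s\<in>{1..T}. s \<le> g x})"
      by (rule sum_ind_card) simp
    also have "{s\<in>{1..T}. s \<le> g x} = {1..g x}" using gT that by auto
    finally show ?thesis by simp
  qed
  then have "(\<Sum>x\<in>X. real (g x)) = (\<Sum>x\<in>X. \<Sum>s\<in>{1..T}. if s \<le> g x then (1::real) else 0)"
    by (intro sum.cong refl) auto
  also have "\<dots> = (\<Sum>s\<in>{1..T}. \<Sum>x\<in>X. if s \<le> g x then (1::real) else 0)" by (rule sum.swap)
  also have "\<dots> = (\<Sum>s\<in>{1..T}. real (card {x\<in>X. g x \<ge> s}))"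
    by (intro sum.cong refl sum_ind_card fX)
  finally show ?thesis .
qed

lemma telescope_ineq:
  fixes a b :: "nat \<Rightarrow> real"
  assumes T: "T \<ge> 1" and ab: "\<And>s. b s \<le> a (Suc s) + c" and aT: "a (Suc T) = 0"
  shows "(\<Sum>s\<in>{1..T}. b s) \<le> (\<Sum>s\<in>{1..T}. a s) - a 1 + real T * c"
proof -
  have "(\<Sum>s\<in>{1..T}. b s) \<le> (\<Sum>s\<in>{1..T}. a (Suc s) + c)" by (intro sum_mono ab)
  also have "\<dots> = (\<Sum>s\<in>{1..T}. a (Suc s)) + real T * c" by (simp add: sum.distrib)
  also have "(\<Sum>s\<in>{1..T}. a (Suc s)) = (\<Sum>s\<in>{Suc 1..Suc T}. a s)" by (rule sum.shift_bounds_cl_Suc_ivl[symmetric])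
  also have "\<dots> = (\<Sum>s\<in>{Suc 1..T}. a s) + a (Suc T)" using T by simp
  also have "(\<Sum>s\<in>{1..T}. a s) = a 1 + (\<Sum>s\<in>{Suc 1..T}. a s)" using T by (simp add: sum.atLeast_Suc_atMost)
  ultimately show ?thesis using aT by simp
qed

lemma layer_contra:
  assumes M: "matroid E indep"
    and bnd: "\<forall>e\<in>E. \<forall>j<m. - \<Delta> \<le> W e j \<and> W e j \<le> \<Delta>"
    and A: "indep A" and B: "indep B" and AB: "A \<inter> B = {}" and cA: "card A = k" and cB: "card B = k"
    and tau: "tau > 0" and N: "N = real (nat (2*\<Delta>+1) ^ m)" and N1: "N \<ge> 1"
    and Yb: "\<forall>j<m. \<bar>Y j\<bar> \<le> Yb" and Yb0: "Yb \<ge> 0" and D0: "\<Delta> \<ge> 0"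
    and sepY: "\<And>A' B' a b. A' \<subseteq> A \<Longrightarrow> B' \<subseteq> B \<Longrightarrow> unicolor m W A' \<Longrightarrow> unicolor m W B' \<Longrightarrow>
        indep ((A - A') \<union> B') \<Longrightarrow> card A' = card B' \<Longrightarrow> real (card A') \<ge> tau \<Longrightarrow> a \<in> A' \<Longrightarrow> b \<in> B' \<Longrightarrow>
        (\<Sum>j<m. Y j * (W a j - W b j)) \<ge> (1::int)"
  shows "real k < real_of_int (2 * (int m * Yb * \<Delta>) + 1) * N^2 * tau
                   + real_of_int Yb * real_of_int (l1norm m (\<lambda>j. wsum W A j - wsum W B j))"
proof -
  define F where "F = int m * Yb * \<Delta>"
  have F0: "F \<ge> 0" using Yb0 D0 by (simp add: F_def)
  define f where "f = (\<lambda>e. \<Sum>j<m. Y j * W e j)"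
  have fb: "\<bar>f e\<bar> \<le> F" if e: "e \<in> E" for e
  proof -
    have "\<bar>f e\<bar> \<le> (\<Sum>j<m. \<bar>Y j * W e j\<bar>)" unfolding f_def by (rule sum_abs)
    also have "\<dots> \<le> (\<Sum>j<m. Yb * \<Delta>)"
    proof (rule sum_mono)
      fix j assume "j \<in> {..<m}"
      then have j: "j < m" by simp
      have "\<bar>Y j\<bar> \<le> Yb" using Yb j by auto
      moreover have "- \<Delta> \<le> W e j \<and> W e j \<le> \<Delta>" using bnd e j by blast
      then have "\<bar>W e j\<bar> \<le> \<Delta>" by (simp add: abs_le_iff)
      ultimately have "\<bar>Y j\<bar> \<le> Yb" "\<bar>W e j\<bar> \<le> \<Delta>" by auto
      then show "\<bar>Y j * W e j\<bar> \<le> Yb * \<Delta>" unfolding abs_mult by (intro mult_mono) (use Yb0 in auto)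
    qed
    also have "\<dots> = F" by (simp add: F_def)
    finally show ?thesis .
  qed
  define T where "T = nat (2 * F)"
  define g where "g = (\<lambda>e. nat (f e + F))"
  have AE: "A \<subseteq> E" using mat_E[OF M A] .
  have BE: "B \<subseteq> E" using mat_E[OF M B] .
  have fA: "finite A" using mat_fin[OF M A] .
  have fB: "finite B" using mat_fin[OF M B] .
  have gT: "g e \<le> T" if "e \<in> E" for e using fb[OF that] unfolding g_def T_def by auto
  have greal: "real (g e) = real_of_int (f e) + real_of_int F" if "e \<in> E" for e
    using fb[OF that] unfolding g_def by auto
  have gmono: "f a \<le> f b" if "a \<in> E" "b \<in> E" "g a \<le> g b" for a b
    using that fb[OF that(1)] fb[OF that(2)] unfolding g_def by auto
  define a where "a = (\<lambda>s. real (card {x\<in>A. g x \<ge> s}))"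
  define b where "b = (\<lambda>s. real (card {x\<in>B. g x \<ge> s}))"
  define c where "c = N^2 * tau"
  have KLs: "b s < a (Suc s) + c" for s
  proof -
    have "real (card {x\<in>B. g x \<ge> s}) < real (card {x\<in>A. g x \<ge> Suc s}) + N^2 * tau"
    proof (rule KL[OF M bnd A B AB cA cB _ _ tau N N1])
      show "{x\<in>A. g x \<ge> Suc s} \<subseteq> A" by auto
      show "{x\<in>B. g x \<ge> s} \<subseteq> B" by auto
      fix A' B' assume A': "A' \<subseteq> A - {x\<in>A. g x \<ge> Suc s}" and B': "B' \<subseteq> {x\<in>B. g x \<ge> s}"
        and u1: "unicolor m W A'" and u2: "unicolor m W B'" and cc: "card A' = card B'"
        and ind: "indep ((A - A') \<union> B')" and ct: "real (card A') \<ge> tau"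
      have "card A' \<noteq> 0" using ct tau by auto
      then obtain x where x: "x \<in> A'" by fastforce
      have "card B' \<noteq> 0" using cc \<open>card A' \<noteq> 0\<close> by simp
      then obtain y where y: "y \<in> B'" by fastforce
      have xA: "x \<in> A" "g x \<le> s" using A' x by auto
      have yB: "y \<in> B" "g y \<ge> s" using B' y by auto
      have "f x \<le> f y" using gmono[of x y] xA yB AE BE by auto
      moreover have "(\<Sum>j<m. Y j * (W x j - W y j)) \<ge> 1"
        using sepY[OF _ _ u1 u2 ind cc ct x y] A' B' by auto
      moreover have "(\<Sum>j<m. Y j * (W x j - W y j)) = f x - f y"
        unfolding f_def by (simp add: right_diff_distrib sum_subtractf)
      ultimately show False by simp
    qed
    then show ?thesis by (simp add: a_def b_def c_def)
  qed
  have b0: "b 0 = real k" using cB by (simp add: b_def)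
  have aT: "a (Suc T) = 0"
  proof -
    have "{x\<in>A. g x \<ge> Suc T} = {}" using gT AE by fastforce
    then show ?thesis unfolding a_def by (simp only: card.empty of_nat_0)
  qed
  have sA: "(\<Sum>x\<in>A. real (g x)) = (\<Sum>s\<in>{1..T}. a s)"
    unfolding a_def by (rule layer_sum[OF fA]) (use gT AE in auto)
  have sB: "(\<Sum>x\<in>B. real (g x)) = (\<Sum>s\<in>{1..T}. b s)"
    unfolding b_def by (rule layer_sum[OF fB]) (use gT BE in auto)
  have gA: "(\<Sum>x\<in>A. real (g x)) = (\<Sum>x\<in>A. real_of_int (f x)) + real k * real_of_int F"
    using greal AE cA by (simp add: sum.distrib subset_iff)
  have gB: "(\<Sum>x\<in>B. real (g x)) = (\<Sum>x\<in>B. real_of_int (f x)) + real k * real_of_int F"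
    using greal BE cB by (simp add: sum.distrib subset_iff)
  have fdiff: "(\<Sum>x\<in>A. real_of_int (f x)) - (\<Sum>x\<in>B. real_of_int (f x))
      \<le> real_of_int Yb * real_of_int (l1norm m (\<lambda>j. wsum W A j - wsum W B j))"
  proof -
    have "(\<Sum>x\<in>A. f x) - (\<Sum>x\<in>B. f x) = (\<Sum>j<m. Y j * (wsum W A j - wsum W B j))"
      unfolding f_def wsum_def
      by (simp add: sum_distrib_left right_diff_distrib sum_subtractf sum.swap[of _ A] sum.swap[of _ B])
    also have "\<dots> \<le> (\<Sum>j<m. Yb * \<bar>wsum W A j - wsum W B j\<bar>)"
    proof (rule sum_mono)
      fix j assume "j \<in> {..<m}"
      then have "\<bar>Y j\<bar> \<le> Yb" using Yb by auto
      then have "Y j * (wsum W A j - wsum W B j) \<le> \<bar>Y j\<bar> * \<bar>wsum W A j - wsum W B j\<bar>"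
        by (metis abs_ge_self abs_mult)
      also have "\<dots> \<le> Yb * \<bar>wsum W A j - wsum W B j\<bar>" using \<open>\<bar>Y j\<bar> \<le> Yb\<close> by (intro mult_right_mono) auto
      finally show "Y j * (wsum W A j - wsum W B j) \<le> Yb * \<bar>wsum W A j - wsum W B j\<bar>" .
    qed
    also have "\<dots> = Yb * l1norm m (\<lambda>j. wsum W A j - wsum W B j)" by (simp add: l1norm_def sum_distrib_left)
    finally have "(\<Sum>x\<in>A. f x) - (\<Sum>x\<in>B. f x) \<le> Yb * l1norm m (\<lambda>j. wsum W A j - wsum W B j)" .
    then have "real_of_int ((\<Sum>x\<in>A. f x) - (\<Sum>x\<in>B. f x)) \<le> real_of_int (Yb * l1norm m (\<lambda>j. wsum W A j - wsum W B j))"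
      by (simp only: of_int_le_iff)
    then show ?thesis by simp
  qed
  have c0: "c > 0" using N1 tau by (simp add: c_def)
  have l1: "l1norm m (\<lambda>j. wsum W A j - wsum W B j) \<ge> 0" by (simp add: l1norm_def sum_nonneg)
  have TF: "real T = 2 * real_of_int F" using F0 by (simp add: T_def)
  have kc: "real k < a 1 + c" using KLs[of 0] b0 by simp
  show ?thesis
  proof (cases "T = 0")
    case True
    have "a 1 = 0" using aT True by simp
    then have "real k < c" using kc by simp
    moreover have "c \<le> real_of_int (2 * F + 1) * N^2 * tau"
    proof -
      have "1 * c \<le> real_of_int (2 * F + 1) * c" using F0 c0 by (intro mult_right_mono) auto
      then show ?thesis by (simp add: c_def mult.assoc)
    qed
    moreover have "0 \<le> real_of_int Yb * real_of_int (l1norm m (\<lambda>j. wsum W A j - wsum W B j))"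
      using Yb0 l1 by simp
    ultimately show ?thesis unfolding F_def by linarith
  next
    case False
    have tel: "(\<Sum>s\<in>{1..T}. b s) \<le> (\<Sum>s\<in>{1..T}. a s) - a 1 + real T * c"
      by (rule telescope_ineq) (use False KLs aT in \<open>auto intro: less_imp_le\<close>)
    have "real k < (\<Sum>x\<in>A. real_of_int (f x)) - (\<Sum>x\<in>B. real_of_int (f x)) + (real T + 1) * c"
      using tel kc sA sB gA gB by (simp add: algebra_simps)
    also have "\<dots> \<le> real_of_int Yb * real_of_int (l1norm m (\<lambda>j. wsum W A j - wsum W B j)) + (real T + 1) * c"
      using fdiff by simp
    also have "(real T + 1) * c = real_of_int (2 * F + 1) * N^2 * tau" using TF by (simp add: c_def)
    finally show ?thesis unfolding F_def by simp
  qed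
qed

lemma arith_bound:
  fixes m :: nat and \<Delta> :: int
  assumes m1: "m \<ge> 1" and D1: "\<Delta> \<ge> 1"
  defines "Yb \<equiv> int (m * fact m) * (2*\<Delta>) * (int m * (2*\<Delta>)^2) ^ (m - 1)"
  shows "real_of_int (2 * (int m * Yb * \<Delta>) + 1) * (real (nat (2*\<Delta>+1) ^ m))^2 \<le> (2 * real m * real_of_int \<Delta>)^(10*m)"
    and "real_of_int Yb \<le> real_of_int (2 * (int m * Yb * \<Delta>) + 1) * (real (nat (2*\<Delta>+1) ^ m))^2"
    and "Yb \<ge> 0"
proof -
  define q where "q = 2 * int m * \<Delta>"
  have im1: "int m \<ge> 1" using m1 by simp
  have mD: "int m * \<Delta> \<ge> 1"
  proof -
    have "1 * 1 \<le> int m * \<Delta>" using im1 D1 by (intro mult_mono) auto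
    then show ?thesis by simp
  qed
  have q2: "q \<ge> 2" unfolding q_def using mD by (simp add: mult.assoc)
  have mq: "int m \<le> q" unfolding q_def using m1 D1 by (simp add: mult_le_cancel_left1 mult.assoc)
  have dq: "2 * \<Delta> \<le> q" unfolding q_def using m1 D1 by simp
  have fm: "int (m * fact m) \<le> q ^ (m + 1)"
  proof -
    have "fact m \<le> m ^ m" using fact_le_power[of m, where 'a=nat] by simp
    then have "m * fact m \<le> m * m ^ m" by simp
    also have "m * m ^ m = m ^ (m + 1)" by simp
    finally have "int (m * fact m) \<le> int (m ^ (m + 1))" by (simp only: of_nat_le_iff)
    then have "int (m * fact m) \<le> int m ^ (m + 1)" by (simp only: of_nat_power)
    also have "\<dots> \<le> q ^ (m + 1)" using mq by (intro power_mono) auto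
    finally show ?thesis .
  qed
  have b4: "int m * (2*\<Delta>)^2 \<le> q ^ 2"
  proof -
    have "int m * (2*\<Delta>)^2 \<le> int m * int m * (2*\<Delta>)^2" using m1 by (intro mult_right_mono) auto
    also have "\<dots> = q^2" by (simp add: q_def power2_eq_square algebra_simps)
    finally show ?thesis .
  qed
  have Yb0: "Yb \<ge> 0" unfolding Yb_def using D1 by simp
  have Ybq: "Yb \<le> q ^ (3*m)"
  proof -
    have "(int m * (2*\<Delta>)^2) ^ (m - 1) \<le> (q^2) ^ (m - 1)" using b4 D1 by (intro power_mono) auto
    then have p: "(int m * (2*\<Delta>)^2) ^ (m - 1) \<le> q ^ (2*(m - 1))" by (simp add: power_mult)
    have "Yb \<le> q ^ (m + 1) * q * q ^ (2*(m - 1))" unfolding Yb_def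
      using fm dq p D1 by (intro mult_mono) auto
    also have "\<dots> = q ^ (3*m)"
    proof -
      have "(m + 1) + 1 + 2*(m - 1) = 3*m" using m1 by simp
      have eq1: "q ^ (m + 1) * q * q ^ (2*(m - 1)) = q ^ ((m + 1) + 1 + 2*(m - 1))" by (simp only: power_add power_one_right)
      show ?thesis by (simp only: eq1 \<open>(m + 1) + 1 + 2*(m - 1) = 3*m\<close>)
    qed
    finally show ?thesis .
  qed
  define N where "N = (2*\<Delta>+1) ^ m"
  have Nr: "real (nat (2*\<Delta>+1) ^ m) = real_of_int N" using D1 by (simp add: N_def)
  have N1: "N \<ge> 1" unfolding N_def using D1 by simp
  have Nq: "N \<le> q ^ (2*m)"
  proof -
    have h: "\<Delta> * 1 \<le> \<Delta> * \<Delta>" using D1 by (intro mult_left_mono) auto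
    have "(2*\<Delta>)^2 = 4 * (\<Delta> * \<Delta>)" by (simp add: power2_eq_square)
    then have "2*\<Delta>+1 \<le> (2*\<Delta>)^2" using h D1 by linarith
    also have "\<dots> \<le> q^2" using dq D1 by (intro power_mono) auto
    finally have "(2*\<Delta>+1)^m \<le> (q^2)^m" using D1 by (intro power_mono) auto
    then show ?thesis by (simp add: N_def power_mult)
  qed
  define F2 where "F2 = 2 * (int m * Yb * \<Delta>) + 1"
  have F2q: "F2 \<le> q ^ (3*m + 2)"
  proof -
    have "F2 = q * Yb + 1" by (simp add: F2_def q_def algebra_simps)
    also have "\<dots> \<le> q * q^(3*m) + 1" using Ybq q2 by (simp add: mult_left_mono)
    also have "\<dots> \<le> q * q^(3*m) + q * q^(3*m)"
    proof -
      have "1 \<le> q^(3*m)" using q2 by (intro one_le_power) auto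
      then have "1 * 1 \<le> q * q^(3*m)" using q2 by (intro mult_mono) auto
      then show ?thesis by simp
    qed
    also have "\<dots> \<le> q * (q * q^(3*m))"
    proof -
      have "0 \<le> q * q^(3*m)" using q2 by simp
      then have "2 * (q * q^(3*m)) \<le> q * (q * q^(3*m))" using q2 by (intro mult_right_mono) auto
      then show ?thesis by simp
    qed
    also have "\<dots> = q ^ (3*m + 2)" by (simp add: power_add power2_eq_square mult.assoc)
    finally show ?thesis .
  qed
  have F2Yb: "Yb \<le> F2"
  proof -
    have "Yb * 1 \<le> Yb * (int m * \<Delta>)" using mD Yb0 by (intro mult_left_mono) auto
    then have "Yb \<le> int m * Yb * \<Delta>" by (simp add: algebra_simps)
    then show ?thesis using Yb0 by (simp add: F2_def)
  qed
  have F20: "F2 \<ge> 1" using Yb0 D1 by (simp add: F2_def)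
  have main: "F2 * N^2 \<le> q ^ (10*m)"
  proof -
    have "F2 * N^2 \<le> q ^ (3*m+2) * (q^(2*m))^2" using F2q Nq F20 N1 by (intro mult_mono power_mono) auto
    also have "\<dots> = q ^ (7*m + 2)"
    proof -
      have e1: "q ^ (3*m+2) * (q^(2*m))^2 = q ^ ((3*m+2) + 2*m*2)" by (simp only: power_add power_mult)
      have e2: "(3*m+2) + 2*m*2 = 7*m + 2" by simp
      show ?thesis by (simp only: e1 e2)
    qed
    also have "\<dots> \<le> q ^ (10*m)" using q2 m1 by (intro power_increasing) auto
    finally show ?thesis .
  qed
  have qr: "(2 * real m * real_of_int \<Delta>)^(10*m) = real_of_int (q ^ (10*m))" by (simp add: q_def)
  show "real_of_int (2 * (int m * Yb * \<Delta>) + 1) * (real (nat (2*\<Delta>+1) ^ m))^2 \<le> (2 * real m * real_of_int \<Delta>)^(10*m)"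
    unfolding Nr qr F2_def[symmetric] using main by (simp only: of_int_power[symmetric] of_int_mult[symmetric] of_int_le_iff)
  have "Yb \<le> F2 * N^2"
  proof -
    have "F2 * 1 \<le> F2 * N^2" using N1 F20 by (intro mult_left_mono) (auto simp: one_le_power)
    then show ?thesis using F2Yb by simp
  qed
  then show "real_of_int Yb \<le> real_of_int (2 * (int m * Yb * \<Delta>) + 1) * (real (nat (2*\<Delta>+1) ^ m))^2"
    unfolding Nr F2_def[symmetric] by (simp only: of_int_power[symmetric] of_int_mult[symmetric] of_int_le_iff)
  show "Yb \<ge> 0" by (rule Yb0)
qed

theorem lemma13:
  fixes E :: "'a set" and indep :: "'a set \<Rightarrow> bool"
    and m :: nat and \<Delta> :: int and W :: "'a \<Rightarrow> nat \<Rightarrow> int"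
    and A B :: "'a set" and k :: nat
  assumes "matroid E indep"
    and "m > 0" and "\<Delta> > 0"
    and "\<forall>e\<in>E. \<forall>j<m. - \<Delta> \<le> W e j \<and> W e j \<le> \<Delta>"
    and "indep A" and "indep B" and "A \<inter> B = {}"
    and "card A = k" and "card B = k"
  shows "\<exists>(l::nat) (As :: nat \<Rightarrow> 'a set) (Bs :: nat \<Rightarrow> 'a set) (\<delta> :: nat \<Rightarrow> nat \<Rightarrow> int).
           (\<forall>i\<le>l.
              As i \<subseteq> A \<and> Bs i \<subseteq> B \<and>
              unicolor m W (As i) \<and> unicolor m W (Bs i) \<and>
              indep ((A - As i) \<union> Bs i) \<and>
              card (As i) = card (Bs i) \<and>
              real (card (As i)) \<ge> real k / (2 * real m * real_of_int \<Delta>) ^ (10 * m)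
                                     - real_of_int (l1norm m (\<lambda>j. wsum W A j - wsum W B j)) \<and>
              (\<forall>a\<in>As i. \<forall>b\<in>Bs i. \<forall>j<m. \<delta> i j = W a j - W b j)) \<and>
           in_cone m (\<lambda>j. - \<delta> 0 j) {1..l} \<delta>"
proof -
  note M = assms(1) and m0 = assms(2) and D0 = assms(3) and bnd = assms(4)
    and iA = assms(5) and iB = assms(6) and AB = assms(7) and cA = assms(8) and cB = assms(9)
  define tau where "tau = real k / (2 * real m * real_of_int \<Delta>) ^ (10 * m)
                                     - real_of_int (l1norm m (\<lambda>j. wsum W A j - wsum W B j))"
  show ?thesis
  proof (cases "tau \<le> 0")
    case True
    have "in_cone m (\<lambda>j. - (0::int)) {1..0} (\<lambda>_ _. 0)"
      unfolding in_cone_def by (intro exI[of _ "\<lambda>_. 0"]) simp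
    then show ?thesis using iA True unfolding tau_def
      by (intro exI[of _ 0] exI[of _ "\<lambda>_. {}"] exI[of _ "\<lambda>_. {}"] exI[of _ "\<lambda>_ _. 0"]) (auto simp: unicolor_def)
  next
    case False
    then have tau0: "tau > 0" by simp
    define Good where "Good = (\<lambda>A' B'. A' \<subseteq> A \<and> B' \<subseteq> B \<and> unicolor m W A' \<and> unicolor m W B' \<and>
       indep ((A - A') \<union> B') \<and> card A' = card B' \<and> real (card A') \<ge> tau)"
    define dv where "dv = (\<lambda>a b. (\<lambda>j. if j < m then W a j - W b j else 0) :: nat \<Rightarrow> int)"
    define G where "G = {g. \<exists>A' B' a b. Good A' B' \<and> a \<in> A' \<and> b \<in> B' \<and> g = dv a b}"
    have AE: "A \<subseteq> E" using mat_E[OF M iA] .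
    have BE: "B \<subseteq> E" using mat_E[OF M iB] .
    have "G \<subseteq> (\<lambda>(a,b). dv a b) ` (A \<times> B)"
    proof
      fix g assume "g \<in> G"
      then obtain A' B' a b where "Good A' B'" "a \<in> A'" "b \<in> B'" "g = dv a b" unfolding G_def by blast
      then have "a \<in> A" "b \<in> B" "g = dv a b" unfolding Good_def by auto
      then show "g \<in> (\<lambda>(a,b). dv a b) ` (A \<times> B)" by force
    qed
    moreover have "finite ((\<lambda>(a,b). dv a b) ` (A \<times> B))"
      using mat_fin[OF M iA] mat_fin[OF M iB] by simp
    ultimately have finG: "finite G" by (rule finite_subset)
    have Rb: "\<forall>g\<in>G. \<forall>j<m. \<bar>g j\<bar> \<le> 2 * \<Delta>"
    proof (intro ballI allI impI)
      fix g j assume g: "g \<in> G" and j: "j < m"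
      then obtain A' B' a b where "Good A' B'" "a \<in> A'" "b \<in> B'" "g = dv a b" unfolding G_def by blast
      then have ab: "a \<in> E" "b \<in> E" "g = dv a b" unfolding Good_def using AE BE by auto
      have "- \<Delta> \<le> W a j \<and> W a j \<le> \<Delta>" using bnd ab(1) j by blast
      moreover have "- \<Delta> \<le> W b j \<and> W b j \<le> \<Delta>" using bnd ab(2) j by blast
      ultimately show "\<bar>g j\<bar> \<le> 2 * \<Delta>" using ab(3) j by (simp add: dv_def abs_le_iff)
    qed
    have R1: "2 * \<Delta> \<ge> 1" using D0 by simp
    from qgordan[OF finG Rb R1] show ?thesis
    proof
      assume "\<exists>lam::(nat\<Rightarrow>int)\<Rightarrow>real. (\<forall>g\<in>G. lam g \<ge> 0) \<and> (\<exists>g\<in>G. lam g > 0) \<and>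
            (\<forall>j<m. (\<Sum>g\<in>G. lam g * real_of_int (g j)) = 0)"
      then obtain lam where l0: "\<forall>g\<in>G. lam g \<ge> 0" and lpos: "\<exists>g\<in>G. lam g > 0"
        and lsum: "\<forall>j<m. (\<Sum>g\<in>G. lam g * real_of_int (g j)) = 0" by blast
      from lpos obtain g0 where g0: "g0 \<in> G" "lam g0 > 0" by blast
      obtain gs where gs: "set gs = G" "distinct gs" using finite_distinct_list[OF finG] by blast
      have "\<forall>g\<in>G. \<exists>P. Good (fst P) (snd P) \<and> (\<exists>a\<in>fst P. \<exists>b\<in>snd P. g = dv a b)"
        unfolding G_def by force
      then obtain wit where wit: "\<forall>g\<in>G. Good (fst (wit g)) (snd (wit g)) \<and> (\<exists>a\<in>fst (wit g). \<exists>b\<in>snd (wit g). g = dv a b)"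
        by (rule bchoice[elim_format]) blast
      define l where "l = length gs"
      define dl where "dl = (\<lambda>i. if i = 0 then g0 else gs ! (i - 1))"
      have dlG: "dl i \<in> G" if "i \<le> l" for i
      proof (cases "i = 0")
        case True then show ?thesis using g0 by (simp add: dl_def)
      next
        case False
        then have "i - 1 < length gs" using that by (simp add: l_def)
        then have "gs ! (i - 1) \<in> G" using gs(1) nth_mem by blast
        then show ?thesis using False by (simp add: dl_def)
      qed
      define As where "As = (\<lambda>i. fst (wit (dl i)))"
      define Bs where "Bs = (\<lambda>i. snd (wit (dl i)))"
      have part1: "\<forall>i\<le>l.
              As i \<subseteq> A \<and> Bs i \<subseteq> B \<and>
              unicolor m W (As i) \<and> unicolor m W (Bs i) \<and>
              indep ((A - As i) \<union> Bs i) \<and>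
              card (As i) = card (Bs i) \<and>
              real (card (As i)) \<ge> real k / (2 * real m * real_of_int \<Delta>) ^ (10 * m)
                                     - real_of_int (l1norm m (\<lambda>j. wsum W A j - wsum W B j)) \<and>
              (\<forall>a\<in>As i. \<forall>b\<in>Bs i. \<forall>j<m. dl i j = W a j - W b j)"
      proof (intro allI impI)
        fix i assume i: "i \<le> l"
        have w: "Good (As i) (Bs i)" "\<exists>a\<in>As i. \<exists>b\<in>Bs i. dl i = dv a b"
          using wit dlG[OF i] unfolding As_def Bs_def by auto
        obtain a0 b0 where ab0: "a0 \<in> As i" "b0 \<in> Bs i" "dl i = dv a0 b0" using w(2) by blast
        have uA: "unicolor m W (As i)" and uB: "unicolor m W (Bs i)" using w(1) unfolding Good_def by auto
        have dd: "\<forall>a\<in>As i. \<forall>b\<in>Bs i. \<forall>j<m. dl i j = W a j - W b j"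
        proof (intro ballI allI impI)
          fix a b j assume a: "a \<in> As i" and b: "b \<in> Bs i" and j: "j < m"
          have "W a0 j = W a j" using uA ab0(1) a j unfolding unicolor_def by blast
          moreover have "W b0 j = W b j" using uB ab0(2) b j unfolding unicolor_def by blast
          ultimately show "dl i j = W a j - W b j" using ab0(3) j by (simp add: dv_def)
        qed
        show "As i \<subseteq> A \<and> Bs i \<subseteq> B \<and>
              unicolor m W (As i) \<and> unicolor m W (Bs i) \<and>
              indep ((A - As i) \<union> Bs i) \<and>
              card (As i) = card (Bs i) \<and>
              real (card (As i)) \<ge> real k / (2 * real m * real_of_int \<Delta>) ^ (10 * m)
                                     - real_of_int (l1norm m (\<lambda>j. wsum W A j - wsum W B j)) \<and>
              (\<forall>a\<in>As i. \<forall>b\<in>Bs i. \<forall>j<m. dl i j = W a j - W b j)"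
          using w(1) dd unfolding Good_def tau_def by blast
      qed
      define cc where "cc = (\<lambda>g. if g = g0 then 0 else lam g / lam g0)"
      define c where "c = (\<lambda>i. cc (dl i))"
      have part2: "in_cone m (\<lambda>j. - dl 0 j) {1..l} dl"
        unfolding in_cone_def
      proof (intro exI[of _ c] conjI ballI allI impI)
        fix i assume "i \<in> {1..l}"
        then have "dl i \<in> G" using dlG by auto
        then show "c i \<ge> 0" unfolding c_def cc_def using l0 g0 by auto
      next
        fix j assume j: "j < m"
        have "(\<Sum>i\<in>{1..l}. c i * real_of_int (dl i j)) = (\<Sum>i<l. c (Suc i) * real_of_int (dl (Suc i) j))"
          using sum.atLeast1_atMost_eq[of "\<lambda>i. c i * real_of_int (dl i j)" l] by simp
        also have "\<dots> = (\<Sum>i<l. cc (gs ! i) * real_of_int ((gs ! i) j))"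
          by (simp add: c_def dl_def)
        also have "\<dots> = (\<Sum>g\<in>G. cc g * real_of_int (g j))"
          by (rule sum.reindex_bij_betw[OF bij_betw_nth[OF gs(2) _ gs(1)[symmetric]]]) (simp add: l_def)
        also have "\<dots> = (\<Sum>g\<in>G. lam g / lam g0 * real_of_int (g j) - (if g = g0 then real_of_int (g0 j) else 0))"
          by (intro sum.cong refl) (use g0 in \<open>auto simp: cc_def\<close>)
        also have "\<dots> = (\<Sum>g\<in>G. lam g * real_of_int (g j)) / lam g0 - real_of_int (g0 j)"
          using g0 finG by (simp add: sum_subtractf sum_divide_distrib)
        also have "\<dots> = - real_of_int (g0 j)" using lsum j by simp
        finally show "real_of_int (- dl 0 j) = (\<Sum>i\<in>{1..l}. c i * real_of_int (dl i j))"
          by (simp add: dl_def)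
      qed
      show ?thesis using part1 part2 by blast
    next
      assume "\<exists>Y::nat\<Rightarrow>int. (\<forall>g\<in>G. (\<Sum>j<m. Y j * g j) \<ge> 1) \<and>
            (\<forall>j<m. \<bar>Y j\<bar> \<le> int (m * fact m) * (2 * \<Delta>) * (int m * (2 * \<Delta>)^2) ^ (m - 1))"
      then obtain Y where sepG: "\<forall>g\<in>G. (\<Sum>j<m. Y j * g j) \<ge> 1"
        and Ybnd: "\<forall>j<m. \<bar>Y j\<bar> \<le> int (m * fact m) * (2 * \<Delta>) * (int m * (2 * \<Delta>)^2) ^ (m - 1)" by blast
      define Yb where "Yb = int (m * fact m) * (2 * \<Delta>) * (int m * (2 * \<Delta>)^2) ^ (m - 1)"
      have m1: "m \<ge> 1" using m0 by simp
      have D1: "\<Delta> \<ge> 1" using D0 by simp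
      note ar = arith_bound[OF m1 D1]
      have Yb0: "Yb \<ge> 0" using ar(3) unfolding Yb_def .
      define N where "N = real (nat (2*\<Delta>+1) ^ m)"
      have N1: "N \<ge> 1" unfolding N_def using D0 by simp
      have sepY: "(\<Sum>j<m. Y j * (W a j - W b j)) \<ge> 1"
        if "A' \<subseteq> A" "B' \<subseteq> B" "unicolor m W A'" "unicolor m W B'" "indep ((A - A') \<union> B')"
           "card A' = card B'" "real (card A') \<ge> tau" "a \<in> A'" "b \<in> B'" for A' B' a b
      proof -
        have "Good A' B'" unfolding Good_def using that by blast
        then have "dv a b \<in> G" unfolding G_def using that by blast
        then have "(\<Sum>j<m. Y j * dv a b j) \<ge> 1" using sepG by blast
        moreover have "(\<Sum>j<m. Y j * dv a b j) = (\<Sum>j<m. Y j * (W a j - W b j))"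
          by (intro sum.cong refl) (simp add: dv_def)
        ultimately show ?thesis by simp
      qed
      have lc: "real k < real_of_int (2 * (int m * Yb * \<Delta>) + 1) * N^2 * tau
                   + real_of_int Yb * real_of_int (l1norm m (\<lambda>j. wsum W A j - wsum W B j))"
        by (rule layer_contra[OF M bnd iA iB AB cA cB tau0 N_def N1 _ Yb0 _ sepY])
           (use Ybnd D0 in \<open>auto simp: Yb_def\<close>)
      define X where "X = real_of_int (2 * (int m * Yb * \<Delta>) + 1) * N^2"
      define D where "D = (2 * real m * real_of_int \<Delta>) ^ (10 * m)"
      define mu where "mu = real_of_int (l1norm m (\<lambda>j. wsum W A j - wsum W B j))"
      have XD: "X \<le> D" using ar(1) unfolding X_def D_def N_def Yb_def .
      have YX: "real_of_int Yb \<le> X" using ar(2) unfolding X_def N_def Yb_def .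
      have Dpos: "D > 0" unfolding D_def using m0 D0 by simp
      have mu0: "mu \<ge> 0" unfolding mu_def by (simp add: l1norm_def sum_nonneg)
      have X0: "X \<ge> 0" using YX Yb0 by linarith
      have taud: "tau = real k / D - mu" unfolding tau_def D_def mu_def ..
      have lc': "real k < X * tau + real_of_int Yb * mu" using lc unfolding X_def mu_def by simp
      have "X * (real k / D) \<le> real k"
      proof -
        have "X * (real k / D) = (X / D) * real k" by simp
        also have "\<dots> \<le> 1 * real k" using XD Dpos by (intro mult_right_mono) auto
        finally show ?thesis by simp
      qed
      moreover have "real_of_int Yb * mu \<le> X * mu" using YX mu0 by (rule mult_right_mono)
      ultimately have "X * tau + real_of_int Yb * mu \<le> real k"
        unfolding taud by (simp add: right_diff_distrib)
      then show ?thesis using lc' by linarith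
    qed
  qed
qed

end
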